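(* Let $H$ be an infinite-dimensional complex separable Hilbert space and let $T\in\mathcal{B}(H)$ be idempotent, i.e. $T^2=T$. Then the following are equivalent: (i) $T\in\mathcal{AN}(H)$; (ii) either the range $R(T)$ or the kernel $N(T)$ is finite dimensional; (iii) $T\in\mathcal{AM}(H)$; (iv) $T\in\overline{\mathcal{AN}(H)}$.
   Context: $\mathcal{B}(H)$ denotes bounded linear operators on $H$ with the operator norm. $T\in\mathcal{B}(H)$ is norm attaining if $\|Tx\|=\|T\|$ for some unit vector $x$; $T\in\mathcal{AN}(H)$ (absolutely norm attaining) if for every nonzero closed subspace $M\subseteq H$ the restriction $T|_M:M\to H$ is norm attaining. The minimum modulus is $m(T)=\inf\{\|Tx\|:\|x\|=1\}$; $T$ is minimum attaining if $\|Tx\|=m(T)$ for some unit vector $x$; $T\in\mathcal{AM}(H)$ (absolutely minimum attaining) if for every nonzero closed subspace $M\subseteq H$ the restriction $T|_M$ is minimum attaining. $\overline{\mathcal{AN}(H)}$ is the operator-norm closure of $\mathcal{AN}(H)$. *)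

theory Defs
  imports "HOL-Analysis.Analysis"
begin

class complex_vector = real_vector +
  fixes scaleC :: "complex \<Rightarrow> 'a \<Rightarrow> 'a" (infixr \<open>*\<^sub>C\<close> 75)
  assumes scaleC_add_right: "a *\<^sub>C (x + y) = a *\<^sub>C x + a *\<^sub>C y"
    and scaleC_add_left: "(a + b) *\<^sub>C x = a *\<^sub>C x + b *\<^sub>C x"
    and scaleC_scaleC: "a *\<^sub>C (b *\<^sub>C x) = (a * b) *\<^sub>C x"
    and scaleC_one: "1 *\<^sub>C x = x"
    and scaleR_scaleC: "scaleR r = scaleC (complex_of_real r)"

class complex_normed_vector = complex_vector + real_normed_vector +
  assumes norm_scaleC: "norm (a *\<^sub>C x) = cmod a * norm x"

class complex_inner = complex_normed_vector + sgn_div_norm + dist_norm + uniformity_dist + open_uniformity +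
  fixes cinner :: "'a \<Rightarrow> 'a \<Rightarrow> complex"
  assumes cinner_commute: "cinner x y = cnj (cinner y x)"
    and cinner_add_left: "cinner (x + y) z = cinner x z + cinner y z"
    and cinner_scaleC_left: "cinner (r *\<^sub>C x) y = cnj r * cinner x y"
    and cinner_ge_zero: "0 \<le> Re (cinner x x)"
    and cinner_eq_zero_iff: "cinner x x = 0 \<longleftrightarrow> x = 0"
    and norm_eq_sqrt_cinner: "norm x = sqrt (Re (cinner x x))"

class chilbert_space = complex_inner + complete_space

text \<open>Non-vacuity: the complex numbers form a complex Hilbert space.\<close>

instantiation complex :: chilbert_space
begin
definition scaleC_complex :: "complex \<Rightarrow> complex \<Rightarrow> complex" where
  "scaleC_complex a x = a * x"
definition cinner_complex :: "complex \<Rightarrow> complex \<Rightarrow> complex" where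
  "cinner_complex x y = cnj x * y"
instance
proof
  fix a b x y z :: complex and r :: real
  show "a *\<^sub>C (x + y) = a *\<^sub>C x + a *\<^sub>C y" by (simp add: scaleC_complex_def algebra_simps)
  show "(a + b) *\<^sub>C x = a *\<^sub>C x + b *\<^sub>C x" by (simp add: scaleC_complex_def algebra_simps)
  show "a *\<^sub>C (b *\<^sub>C x) = (a * b) *\<^sub>C x" by (simp add: scaleC_complex_def)
  show "1 *\<^sub>C x = x" by (simp add: scaleC_complex_def)
  show "((*\<^sub>R) r :: complex \<Rightarrow> complex) = (*\<^sub>C) (complex_of_real r)"
    by (rule ext) (simp add: scaleC_complex_def scaleR_conv_of_real)
  show "norm (a *\<^sub>C x) = cmod a * norm x" by (simp add: scaleC_complex_def norm_mult)
  show "cinner x y = cnj (cinner y x)" by (simp add: cinner_complex_def)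
  show "cinner (x + y) z = cinner x z + cinner y z" by (simp add: cinner_complex_def algebra_simps)
  show "cinner (a *\<^sub>C x) y = cnj a * cinner x y" by (simp add: cinner_complex_def scaleC_complex_def)
  show "0 \<le> Re (cinner x x)" by (simp add: cinner_complex_def)
  show "(cinner x x = 0) = (x = 0)" by (simp add: cinner_complex_def)
  show "norm x = sqrt (Re (cinner x x))"
    by (simp add: cinner_complex_def cmod_def power2_eq_square)
qed
end

definition clinear :: "('a::complex_vector \<Rightarrow> 'b::complex_vector) \<Rightarrow> bool" where
  "clinear f \<longleftrightarrow> (\<forall>x y. f (x + y) = f x + f y) \<and> (\<forall>c x. f (c *\<^sub>C x) = c *\<^sub>C f x)"

definition cbounded_linear :: "('a::complex_normed_vector \<Rightarrow> 'b::complex_normed_vector) \<Rightarrow> bool" where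
  "cbounded_linear f \<longleftrightarrow> clinear f \<and> (\<exists>K. \<forall>x. norm (f x) \<le> norm x * K)"

definition csubspace :: "'a::complex_vector set \<Rightarrow> bool" where
  "csubspace M \<longleftrightarrow> 0 \<in> M \<and> (\<forall>x\<in>M. \<forall>y\<in>M. x + y \<in> M) \<and> (\<forall>c. \<forall>x\<in>M. c *\<^sub>C x \<in> M)"

definition closed_csubspace :: "'a::complex_normed_vector set \<Rightarrow> bool" where
  "closed_csubspace M \<longleftrightarrow> csubspace M \<and> closed M"

definition cspan :: "'a::complex_vector set \<Rightarrow> 'a set" where
  "cspan B = {(\<Sum>b\<in>F. c b *\<^sub>C b) | F c. finite F \<and> F \<subseteq> B}"

definition cfinite_dim :: "'a::complex_vector set \<Rightarrow> bool" where
  "cfinite_dim S \<longleftrightarrow> (\<exists>B. finite B \<and> cspan B = S)"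

definition separable_H :: "'a::metric_space itself \<Rightarrow> bool" where
  "separable_H _ \<longleftrightarrow> (\<exists>D::'a set. countable D \<and> closure D = UNIV)"

definition norm_on :: "('a::complex_normed_vector \<Rightarrow> 'b::complex_normed_vector) \<Rightarrow> 'a set \<Rightarrow> real" where
  "norm_on T M = Sup {norm (T x) | x. x \<in> M \<and> norm x = 1}"

definition min_modulus_on :: "('a::complex_normed_vector \<Rightarrow> 'b::complex_normed_vector) \<Rightarrow> 'a set \<Rightarrow> real" where
  "min_modulus_on T M = Inf {norm (T x) | x. x \<in> M \<and> norm x = 1}"

definition norm_attaining_on :: "('a::complex_normed_vector \<Rightarrow> 'b::complex_normed_vector) \<Rightarrow> 'a set \<Rightarrow> bool" where
  "norm_attaining_on T M \<longleftrightarrow> (\<exists>x\<in>M. norm x = 1 \<and> norm (T x) = norm_on T M)"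

definition min_attaining_on :: "('a::complex_normed_vector \<Rightarrow> 'b::complex_normed_vector) \<Rightarrow> 'a set \<Rightarrow> bool" where
  "min_attaining_on T M \<longleftrightarrow> (\<exists>x\<in>M. norm x = 1 \<and> norm (T x) = min_modulus_on T M)"

definition AN :: "('a::chilbert_space \<Rightarrow> 'a) set" where
  "AN = {T. cbounded_linear T \<and>
      (\<forall>M. closed_csubspace M \<and> M \<noteq> {0} \<longrightarrow> norm_attaining_on T M)}"

definition AM :: "('a::chilbert_space \<Rightarrow> 'a) set" where
  "AM = {T. cbounded_linear T \<and>
      (\<forall>M. closed_csubspace M \<and> M \<noteq> {0} \<longrightarrow> min_attaining_on T M)}"

definition AN_closure :: "('a::chilbert_space \<Rightarrow> 'a) set" where
  "AN_closure = {T. cbounded_linear T \<and> (\<forall>e>0. \<exists>S\<in>AN. onorm (\<lambda>x. T x - S x) < e)}"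

end

theory Submission
  imports Defs
begin

global_interpretation cvs: vector_space "scaleC :: complex \<Rightarrow> 'a \<Rightarrow> 'a::complex_vector"
  by unfold_locales (simp_all add: scaleC_add_right scaleC_add_left scaleC_scaleC scaleC_one)

lemma cspan_eq: "cspan = cvs.span"
  by (rule ext) (simp add: cspan_def cvs.span_explicit)

lemma csubspace_eq: "csubspace = cvs.subspace"
  by (rule ext) (simp add: csubspace_def cvs.subspace_def)

lemma scaleC_real: "complex_of_real r *\<^sub>C x = r *\<^sub>R x"
  by (simp add: scaleR_scaleC)

lemma scaleC_zero_right: "a *\<^sub>C (0::'a::complex_vector) = 0"
  using cvs.scale_right_distrib[of a 0 0] by simp

lemma scaleC_zero_left: "0 *\<^sub>C (x::'a::complex_vector) = 0"
  by simp

lemma scaleC_minus_right: "a *\<^sub>C (- x::'a::complex_vector) = - (a *\<^sub>C x)"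
  by (metis add.right_inverse add_eq_0_iff cvs.scale_right_distrib scaleC_zero_right)

lemma scaleC_diff_right: "a *\<^sub>C (x - y::'a::complex_vector) = a *\<^sub>C x - a *\<^sub>C y"
  by (simp add: cvs.scale_right_diff_distrib)

lemma cinner_scaleC_right: "cinner x (r *\<^sub>C y) = r * cinner x y"
  by (metis cinner_commute cinner_scaleC_left complex_cnj_cnj complex_cnj_mult)

lemma cinner_add_right: "cinner x (y + z) = cinner x y + cinner x z"
  by (metis cinner_commute cinner_add_left complex_cnj_add)

lemma cinner_zero_left[simp]: "cinner 0 x = 0"
  using cinner_add_left[of 0 0 x] by simp

lemma cinner_zero_right[simp]: "cinner x 0 = 0"
  using cinner_add_right[of x 0 0] by simp

lemma cinner_minus_left: "cinner (- x) y = - cinner x y"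
proof -
  have "cinner x y + cinner (-x) y = 0" using cinner_add_left[of x "-x" y] by simp
  then show ?thesis by (metis neg_eq_iff_add_eq_0)
qed

lemma cinner_minus_right: "cinner x (- y) = - cinner x y"
proof -
  have "cinner x y + cinner x (-y) = 0" using cinner_add_right[of x y "-y"] by simp
  then show ?thesis by (metis neg_eq_iff_add_eq_0)
qed

lemma cinner_diff_left: "cinner (x - y) z = cinner x z - cinner y z"
  using cinner_add_left[of x "-y" z] by (simp add: cinner_minus_left)

lemma cinner_diff_right: "cinner x (y - z) = cinner x y - cinner x z"
  using cinner_add_right[of x y "-z"] by (simp add: cinner_minus_right)

lemma cinner_scaleR_left: "cinner (r *\<^sub>R x) y = r * cinner x y"
  by (simp add: scaleR_scaleC cinner_scaleC_left)

lemma cinner_scaleR_right: "cinner x (r *\<^sub>R y) = r * cinner x y"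
  by (simp add: scaleR_scaleC cinner_scaleC_right)

lemma cinner_sum_right: "cinner x (sum f A) = (\<Sum>a\<in>A. cinner x (f a))"
  by (induct A rule: infinite_finite_induct) (auto simp: cinner_add_right)

lemma cinner_sum_left: "cinner (sum f A) x = (\<Sum>a\<in>A. cinner (f a) x)"
  by (induct A rule: infinite_finite_induct) (auto simp: cinner_add_left)

lemma cinner_self_real: "cinner x x = complex_of_real ((norm x)^2)"
proof -
  have "Im (cinner x x) = - Im (cinner x x)" using cinner_commute[of x x]
    by (metis cnj.sel(2))
  then have "Im (cinner x x) = 0" by linarith
  moreover have "Re (cinner x x) = (norm x)^2"
    using norm_eq_sqrt_cinner[of x] cinner_ge_zero[of x] by simp
  ultimately show ?thesis by (simp add: complex_eq_iff)
qed

lemma norm_sq_cinner: "(norm x)^2 = Re (cinner x x)"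
  by (simp add: cinner_self_real)

lemma norm_add_sq: "(norm (x + y))^2 = (norm x)^2 + (norm y)^2 + 2 * Re (cinner x y)"
proof -
  have "cinner (x+y) (x+y) = cinner x x + cinner y y + (cinner x y + cinner y x)"
    by (simp add: cinner_add_left cinner_add_right)
  moreover have "Re (cinner x y + cinner y x) = 2 * Re (cinner x y)"
    using cinner_commute[of y x] by simp
  ultimately show ?thesis by (simp add: norm_sq_cinner)
qed

lemma norm_diff_sq: "(norm (x - y))^2 = (norm x)^2 + (norm y)^2 - 2 * Re (cinner x y)"
  using norm_add_sq[of x "-y"] by (simp add: cinner_minus_right)

lemma pythagoras: "cinner x y = 0 \<Longrightarrow> (norm (x + y))^2 = (norm x)^2 + (norm y)^2"
  by (simp add: norm_add_sq)

lemma cinner_eq_zero_sym: "cinner x y = 0 \<longleftrightarrow> cinner y x = 0"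
  by (metis cinner_commute complex_cnj_zero_iff)


lemma t1: fixes c :: complex and n :: real
  shows "Re ((cnj c / complex_of_real n) * c) = (cmod c)^2 / n"
proof -
  have eq: "cnj c * c = complex_of_real ((cmod c)^2)" using complex_norm_square[of c] by (simp add: mult.commute)
  have "(cnj c / complex_of_real n) * c = complex_of_real ((cmod c)^2) / complex_of_real n"
    by (simp only: times_divide_eq_left eq)
  also have "\<dots> = complex_of_real ((cmod c)^2 / n)" by (simp only: of_real_divide)
  finally show ?thesis by (simp only: Re_complex_of_real)
qed
lemma t2: fixes c :: complex and n :: real assumes "n > 0"
  shows "cmod (cnj c / complex_of_real n) = cmod c / n"
  using assms by (simp only: norm_divide complex_mod_cnj norm_of_real abs_of_pos)
lemma t3: fixes t :: complex and y :: "'a::complex_normed_vector" shows "(norm (t *\<^sub>C y))^2 = (cmod t)^2 * (norm y)^2"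
  by (simp add: norm_scaleC power_mult_distrib)
lemma t4: "cinner x (t *\<^sub>C y) = t * cinner x y" by (simp add: cinner_scaleC_right)
lemma t5: assumes n: "n > 0" and "0 \<le> (norm x)^2 - (cmod c)^2 / n" shows "(cmod c)^2 \<le> (norm x)^2 * (n::real)"
proof -
  have "(cmod c)^2 / n \<le> (norm x)^2" using assms by simp
  then show ?thesis using n by (simp add: divide_le_eq)
qed

lemma cauchy_schwarz: "cmod (cinner x y) \<le> norm x * norm y"
proof (cases "y = 0")
  case True then show ?thesis by simp
next
  case False
  define c where "c = cinner x y"
  define n where "n = (norm y)^2"
  define t where "t = cnj c / complex_of_real n"
  have n: "n > 0" using False by (simp add: n_def)
  have e1: "(norm (x - t *\<^sub>C y))^2 = (norm x)^2 + (norm (t *\<^sub>C y))^2 - 2 * Re (cinner x (t *\<^sub>C y))"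
    by (rule norm_diff_sq)
  have e2: "(norm (t *\<^sub>C y))^2 = (cmod c)^2 / n"
    unfolding t3 n_def[symmetric] t_def t2[OF n] using n by (simp add: power2_eq_square)
  have e3: "Re (cinner x (t *\<^sub>C y)) = (cmod c)^2 / n" unfolding t4 c_def[symmetric] t_def t1 ..
  have "0 \<le> (norm (x - t *\<^sub>C y))^2" by simp
  then have "0 \<le> (norm x)^2 - (cmod c)^2 / n" unfolding e1 e2 e3 by simp
  then have "(cmod c)^2 \<le> (norm x)^2 * n" using t5 n by blast
  also have "(norm x)^2 * n = (norm x * norm y)^2" by (simp only: n_def power_mult_distrib)
  finally have "(cmod c)^2 \<le> (norm x * norm y)^2" .
  then show ?thesis unfolding c_def by (rule power2_le_imp_le) simp
qed

lemma clinear_add: "clinear T \<Longrightarrow> T (x + y) = T x + T y"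
  by (simp add: clinear_def)

lemma clinear_scaleC: "clinear T \<Longrightarrow> T (c *\<^sub>C x) = c *\<^sub>C T x"
  by (simp add: clinear_def)

lemma clinear_scaleR: "clinear T \<Longrightarrow> T (r *\<^sub>R x) = r *\<^sub>R T x"
  by (simp add: clinear_def scaleR_scaleC)

lemma clinear_linear: "clinear T \<Longrightarrow> linear T"
  by (rule linearI) (simp_all add: clinear_add clinear_scaleR)

lemma clinear_zero: "clinear T \<Longrightarrow> T 0 = 0"
  using clinear_linear linear_0 by blast

lemma clinear_diff: "clinear T \<Longrightarrow> T (x - y) = T x - T y"
  using clinear_linear linear_diff by blast

lemma clinear_minus: "clinear T \<Longrightarrow> T (- x) = - T x"
  using clinear_linear linear_neg by blast

lemma clinear_sum: "clinear T \<Longrightarrow> T (sum f A) = (\<Sum>a\<in>A. T (f a))"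
  by (induct A rule: infinite_finite_induct) (auto simp: clinear_add clinear_zero)

lemma cbl_clinear: "cbounded_linear T \<Longrightarrow> clinear T"
  by (simp add: cbounded_linear_def)

lemma cbl_bounded_linear: "cbounded_linear T \<Longrightarrow> bounded_linear T"
  unfolding cbounded_linear_def
  by (auto intro!: bounded_linear_intro simp: clinear_add clinear_scaleR)

lemma cbl_continuous: "cbounded_linear T \<Longrightarrow> continuous_on S T"
  using cbl_bounded_linear linear_continuous_on by blast

lemma bounded_linear_cinner_right: "bounded_linear (\<lambda>x::'a::complex_inner. cinner a x)"
proof (rule bounded_linear_intro[where K="norm a"])
  show "cinner a (x + y) = cinner a x + cinner a y" for x y by (rule cinner_add_right)
  show "cinner a (r *\<^sub>R x) = r *\<^sub>R cinner a x" for r x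
    by (simp only: cinner_scaleR_right scaleR_conv_of_real)
  show "norm (cinner a x) \<le> norm x * norm a" for x
    using cauchy_schwarz[of a x] by (simp only: mult.commute)
qed

lemma bounded_linear_cinner_left: "bounded_linear (\<lambda>x::'a::complex_inner. cinner x a)"
proof (rule bounded_linear_intro[where K="norm a"])
  show "cinner (x + y) a = cinner x a + cinner y a" for x y by (rule cinner_add_left)
  show "cinner (r *\<^sub>R x) a = r *\<^sub>R cinner x a" for r x
    by (simp only: cinner_scaleR_left scaleR_conv_of_real)
  show "norm (cinner x a) \<le> norm x * norm a" for x
    using cauchy_schwarz[of x a] .
qed

lemma continuous_cinner_right[continuous_intros]: "continuous_on S (\<lambda>x::'a::complex_inner. cinner a x)"
  using bounded_linear_cinner_right linear_continuous_on by blast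

lemma continuous_cinner_left[continuous_intros]: "continuous_on S (\<lambda>x::'a::complex_inner. cinner x a)"
  using bounded_linear_cinner_left linear_continuous_on by blast

lemma tendsto_cinner_right: "(f \<longlongrightarrow> l) F \<Longrightarrow> ((\<lambda>n. cinner a (f n)) \<longlongrightarrow> cinner a l) F"
  using bounded_linear.tendsto[OF bounded_linear_cinner_right] .

lemma tendsto_cinner_left: "(f \<longlongrightarrow> l) F \<Longrightarrow> ((\<lambda>n. cinner (f n) a) \<longlongrightarrow> cinner l a) F"
  using bounded_linear.tendsto[OF bounded_linear_cinner_left] .


lemma csubspace_kernel: "clinear T \<Longrightarrow> csubspace {x. T x = 0}"
  by (auto simp: csubspace_def clinear_add clinear_scaleC clinear_zero)

lemma csubspace_range: "clinear (T::'a::complex_vector \<Rightarrow> 'b::complex_vector) \<Longrightarrow> csubspace (range T)"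
  unfolding csubspace_def
proof (intro conjI ballI allI)
  assume T: "clinear T"
  show "0 \<in> range T" using clinear_zero[OF T, symmetric] by blast
  show "x + y \<in> range T" if x: "x \<in> range T" and y: "y \<in> range T" for x y
  proof -
    obtain a b where "x = T a" "y = T b" using x y by blast
    then have "x + y = T (a + b)" using clinear_add[OF T] by simp
    then show ?thesis by blast
  qed
  show "c *\<^sub>C x \<in> range T" if x: "x \<in> range T" for c x
  proof -
    obtain a where "x = T a" using x by blast
    then have "c *\<^sub>C x = T (c *\<^sub>C a)" using clinear_scaleC[OF T] by simp
    then show ?thesis by blast
  qed
qed

lemma closed_kernel: "cbounded_linear T \<Longrightarrow> closed {x. T x = 0}"
  using closed_Collect_eq[OF cbl_continuous continuous_on_const] by blast

lemma csubspace_Int: "csubspace A \<Longrightarrow> csubspace B \<Longrightarrow> csubspace (A \<inter> B)"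
  by (auto simp: csubspace_def)

lemma csubspace_scaleR: "csubspace A \<Longrightarrow> x \<in> A \<Longrightarrow> r *\<^sub>R x \<in> A"
  by (simp add: csubspace_def scaleR_scaleC)

lemma csubspace_diff: "csubspace A \<Longrightarrow> x \<in> A \<Longrightarrow> y \<in> A \<Longrightarrow> x - y \<in> A"
  by (simp add: csubspace_eq cvs.subspace_diff)

lemma csubspace_add: "csubspace A \<Longrightarrow> x \<in> A \<Longrightarrow> y \<in> A \<Longrightarrow> x + y \<in> A"
  by (simp add: csubspace_def)

lemma csubspace_scaleC: "csubspace A \<Longrightarrow> x \<in> A \<Longrightarrow> c *\<^sub>C x \<in> A"
  by (simp add: csubspace_def)

lemma csubspace_0: "csubspace A \<Longrightarrow> 0 \<in> A"
  by (simp add: csubspace_def)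

lemma csubspace_orth: "csubspace {x::'a::complex_inner. \<forall>y\<in>A. cinner y x = 0}"
  by (auto simp: csubspace_def cinner_add_right cinner_scaleC_right)

lemma closed_orth: "closed {x::'a::complex_inner. \<forall>y\<in>A. cinner y x = 0}"
proof -
  have "{x::'a. \<forall>y\<in>A. cinner y x = 0} = (\<Inter>y\<in>A. {x. cinner y x = 0})" by auto
  moreover have "closed {x::'a. cinner y x = 0}" for y
    using closed_Collect_eq[OF continuous_cinner_right continuous_on_const] by blast
  ultimately show ?thesis by auto
qed


lemma bounded_linear_scaleC: "bounded_linear (\<lambda>x::'a::complex_normed_vector. c *\<^sub>C x)"
proof (rule bounded_linear_intro[where K="cmod c"])
  show "c *\<^sub>C (x + y) = c *\<^sub>C x + c *\<^sub>C y" for x y :: 'a by (rule scaleC_add_right)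
  show "c *\<^sub>C (r *\<^sub>R x) = r *\<^sub>R (c *\<^sub>C x)" for r and x :: 'a
    by (simp only: scaleR_scaleC scaleC_scaleC mult.commute)
  show "norm (c *\<^sub>C x) \<le> norm x * cmod c" for x :: 'a
    by (simp only: norm_scaleC mult.commute order_refl)
qed

lemma csubspace_closure:
  fixes S :: "'a::complex_normed_vector set"
  assumes S: "csubspace S" shows "closed_csubspace (closure S)"
  unfolding closed_csubspace_def csubspace_def
proof (intro conjI ballI allI closed_closure)
  show "0 \<in> closure S" using S closure_subset unfolding csubspace_def by blast
  show "x + y \<in> closure S" if xin: "x \<in> closure S" and yin: "y \<in> closure S" for x y
  proof -
    obtain f where f: "\<forall>n. f n \<in> S" "f \<longlonglongrightarrow> x" using closure_sequential[THEN iffD1, OF xin] by (elim exE conjE) (rule that, assumption+)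
    obtain g where g: "\<forall>n. g n \<in> S" "g \<longlonglongrightarrow> y" using closure_sequential[THEN iffD1, OF yin] by (elim exE conjE) (rule that, assumption+)
    have "\<forall>n. f n + g n \<in> S" using f g S by (simp add: csubspace_add)
    moreover have "(\<lambda>n. f n + g n) \<longlonglongrightarrow> x + y" using f g by (intro tendsto_add) auto
    ultimately show ?thesis by (intro closure_sequential[THEN iffD2] exI conjI)
  qed
  show "c *\<^sub>C x \<in> closure S" if xin: "x \<in> closure S" for c x
  proof -
    obtain f where f: "\<forall>n. f n \<in> S" "f \<longlonglongrightarrow> x" using closure_sequential[THEN iffD1, OF xin] by (elim exE conjE) (rule that, assumption+)
    have "\<forall>n. c *\<^sub>C f n \<in> S" using f S by (simp add: csubspace_scaleC)
    moreover have "(\<lambda>n. c *\<^sub>C f n) \<longlonglongrightarrow> c *\<^sub>C x"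
      using bounded_linear.tendsto[OF bounded_linear_scaleC f(2)] .
    ultimately show ?thesis by (intro closure_sequential[THEN iffD2] exI conjI)
  qed
qed

lemma clinear_complex_scaleC: "(a::complex) *\<^sub>C b = a * b"
  by (simp add: scaleC_complex_def)

lemma fd_peel:
  fixes V :: "'a::complex_vector set" and L :: "'a \<Rightarrow> 'b::complex_vector"
  assumes V: "csubspace V" and L: "clinear L" and B: "finite B" and LV: "L ` V \<subseteq> cspan B"
    and K: "cfinite_dim (V \<inter> {x. L x = 0})"
  shows "cfinite_dim V"
proof -
  have sV: "cvs.subspace V" using V by (simp add: csubspace_eq)
  have sU: "cvs.subspace (L ` V)"
  proof (rule cvs.subspaceI)
    show "0 \<in> L ` V" using clinear_zero[OF L] csubspace_0[OF V] by (metis image_eqI)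
    show "x + y \<in> L ` V" if x: "x \<in> L ` V" and y: "y \<in> L ` V" for x y
    proof -
      obtain a b where ab: "a \<in> V" "b \<in> V" "x = L a" "y = L b" using x y by blast
      then have "x + y = L (a + b)" using clinear_add[OF L] by simp
      moreover have "a + b \<in> V" using ab V by (simp add: csubspace_add)
      ultimately show ?thesis by blast
    qed
    show "c *\<^sub>C x \<in> L ` V" if x: "x \<in> L ` V" for c x
    proof -
      obtain a where ab: "a \<in> V" "x = L a" using x by blast
      then have "c *\<^sub>C x = L (c *\<^sub>C a)" using clinear_scaleC[OF L] by simp
      moreover have "c *\<^sub>C a \<in> V" using ab V by (simp add: csubspace_scaleC)
      ultimately show ?thesis by blast
    qed
  qed
  obtain C where C: "C \<subseteq> L ` V" "cvs.independent C" "L ` V \<subseteq> cvs.span C"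
    "card C = cvs.dim (L ` V)"
    by (rule cvs.basis_exists)
  have fC: "finite C"
    using cvs.independent_span_bound[OF B C(2)] C(1) LV by (auto simp: cspan_eq)
  have "\<forall>c\<in>C. \<exists>v. v \<in> V \<and> L v = c" using C(1) by blast
  then obtain w where w: "\<forall>c\<in>C. w c \<in> V \<and> L (w c) = c" by (rule bchoice[THEN exE]) blast
  obtain D where D: "finite D" "cspan D = V \<inter> {x. L x = 0}" using K cfinite_dim_def by blast
  define E where "E = D \<union> w ` C"
  have fE: "finite E" using D(1) fC by (simp add: E_def)
  have "cvs.span E = V"
  proof
    have "E \<subseteq> V"
    proof -
      have "D \<subseteq> cvs.span D" by (rule cvs.span_superset)
      then have "D \<subseteq> V" using D(2) by (auto simp: cspan_eq)
      then show ?thesis using w by (auto simp: E_def)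
    qed
    then show "cvs.span E \<subseteq> V" using cvs.span_minimal[OF _ sV] by blast
  next
    show "V \<subseteq> cvs.span E"
    proof
      fix x assume x: "x \<in> V"
      have "L x \<in> cvs.span C" using x C(3) by blast
      then obtain u where u: "L x = (\<Sum>c\<in>C. u c *\<^sub>C c)" using cvs.span_finite[OF fC] by blast
      define y where "y = (\<Sum>c\<in>C. u c *\<^sub>C w c)"
      have yV: "y \<in> V" unfolding y_def using w sV
        by (intro cvs.subspace_sum) (auto intro: cvs.subspace_scale)
      have Ly: "L y = L x" unfolding y_def u using w
        by (simp add: clinear_sum[OF L] clinear_scaleC[OF L])
      have "x - y \<in> V \<inter> {x. L x = 0}" using x yV V Ly by (simp add: csubspace_diff clinear_diff[OF L])
      then have "x - y \<in> cvs.span D" using D(2) by (simp add: cspan_eq)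
      then have 1: "x - y \<in> cvs.span E" using cvs.span_mono[of D E] by (auto simp: E_def)
      have "y \<in> cvs.span (w ` C)" unfolding y_def
        by (intro cvs.span_sum cvs.span_scale cvs.span_base) auto
      then have 2: "y \<in> cvs.span E" using cvs.span_mono[of "w ` C" E] by (auto simp: E_def)
      have "x = (x - y) + y" by simp
      then show "x \<in> cvs.span E" using cvs.span_add[OF 1 2] by simp
    qed
  qed
  then show ?thesis unfolding cfinite_dim_def cspan_eq using fE by blast
qed

lemma clinear_functional_complex:
  fixes \<phi> :: "'a::complex_vector \<Rightarrow> complex"
  assumes "\<And>x y. \<phi> (x + y) = \<phi> x + \<phi> y" "\<And>c x. \<phi> (c *\<^sub>C x) = c * \<phi> x"
  shows "clinear \<phi>"
  using assms by (simp add: clinear_def scaleC_complex_def)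

lemma cspan_one_complex: "(z::complex) \<in> cspan {1}"
proof -
  have "z *\<^sub>C 1 \<in> cvs.span {1::complex}" by (intro cvs.span_scale cvs.span_base) simp
  moreover have "z *\<^sub>C 1 = z" by (simp add: scaleC_complex_def)
  ultimately show ?thesis by (simp add: cspan_eq)
qed

lemma inf_dim_kernel:
  fixes V :: "'a::complex_vector set" and \<phi> :: "'a \<Rightarrow> complex"
  assumes V: "csubspace V" and L: "clinear \<phi>" and nf: "\<not> cfinite_dim V"
  shows "\<not> cfinite_dim (V \<inter> {x. \<phi> x = 0})"
proof
  assume fd: "cfinite_dim (V \<inter> {x. \<phi> x = 0})"
  have "\<phi> ` V \<subseteq> cspan {1}" using cspan_one_complex by blast
  from fd_peel[OF V L _ this fd] nf show False by simp
qed

lemma not_fd_nonzero: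
  assumes "\<not> cfinite_dim V" "csubspace V"
  shows "\<exists>x\<in>V. x \<noteq> 0"
proof (rule ccontr)
  assume "\<not> ?thesis"
  then have "V = {0}" using assms(2) csubspace_0 by blast
  then have "cspan {} = V" by (simp add: cspan_eq)
  then show False using assms(1) unfolding cfinite_dim_def by blast
qed

lemma parallelogram: "(norm (u + v))^2 + (norm (u - v))^2 = 2 * (norm u)^2 + 2 * (norm (v::'a::complex_inner))^2"
  using norm_add_sq[of u v] norm_diff_sq[of u v] by simp

lemma lin_aux: "(a::real) < d + a1 \<Longrightarrow> b < d + b1 \<Longrightarrow> d \<le> c \<Longrightarrow> 2 * a + 2 * b - 4 * c \<le> 2 * (d + a1) + 2 * (d + b1) - 4 * d"
  by (simp add: algebra_simps)

lemma orth_from_min: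
  fixes v k :: "'a::complex_inner"
  assumes min: "\<And>t::complex. (norm v)^2 \<le> (norm (v - t *\<^sub>C k))^2"
  shows "cinner v k = 0"
proof (rule ccontr)
  define z where "z = cinner v k"
  assume "cinner v k \<noteq> 0"
  then have z: "z \<noteq> 0" by (simp add: z_def)
  define q where "q = (cmod z)^2"
  define m where "m = (norm k)^2"
  define s where "s = 1 / (m + 1)"
  have q: "q > 0" using z by (simp add: q_def)
  have m: "m \<ge> 0" by (simp add: m_def)
  have s: "s > 0" using m by (simp add: s_def)
  have sm: "s * m < 1" using m by (simp add: s_def)
  define t where "t = complex_of_real s * cnj z"
  have tz: "Re (cinner v (t *\<^sub>C k)) = s * q"
  proof -
    have "cinner v (t *\<^sub>C k) = t * z" by (simp add: cinner_scaleC_right z_def)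
    also have "t * z = complex_of_real s * (cnj z * z)" by (simp add: t_def)
    also have "cnj z * z = complex_of_real q" unfolding q_def using complex_norm_square[of z] by (simp add: mult.commute)
    finally have "cinner v (t *\<^sub>C k) = complex_of_real (s * q)" by simp
    then show ?thesis by simp
  qed
  have tk: "(norm (t *\<^sub>C k))^2 = s^2 * q * m"
  proof -
    have "cmod t = s * cmod z" unfolding t_def using s by (simp add: norm_mult)
    then show ?thesis unfolding t3 q_def m_def by (simp add: power_mult_distrib)
  qed
  have "(norm v)^2 \<le> (norm v)^2 + (norm (t *\<^sub>C k))^2 - 2 * Re (cinner v (t *\<^sub>C k))"
    using min[of t] norm_diff_sq[of v "t *\<^sub>C k"] by simp
  then have "0 \<le> s^2 * q * m - 2 * (s * q)" unfolding tk tz by simp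
  moreover have "s^2 * q * m - 2 * (s * q) = (s * q) * (s * m - 2)" by (simp add: algebra_simps power2_eq_square)
  moreover have "(s * q) * (s * m - 2) < 0" using s q sm by (intro mult_pos_neg) auto
  ultimately show False by linarith
qed

lemma projection_exists:
  fixes K :: "'a::chilbert_space set"
  assumes K: "closed_csubspace K"
  shows "\<exists>p\<in>K. \<forall>k\<in>K. cinner k (x - p) = 0"
proof -
  have Ks: "csubspace K" and Kc: "closed K" using K by (auto simp: closed_csubspace_def)
  define D where "D = {(norm (x - k))^2 | k. k \<in> K}"
  define d where "d = Inf D"
  have D0: "D \<noteq> {}" using csubspace_0[OF Ks] by (auto simp: D_def)
  have Db: "bdd_below D" by (rule bdd_belowI[of _ 0]) (auto simp: D_def)
  have dle: "d \<le> (norm (x - k))^2" if "k \<in> K" for k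
    unfolding d_def by (rule cInf_lower[OF _ Db]) (use that in \<open>auto simp: D_def\<close>)
  have "\<exists>k\<in>K. (norm (x - k))^2 < d + 1 / (real n + 1)" for n
  proof -
    have "Inf D < d + 1 / (real n + 1)" unfolding d_def by simp
    then obtain y where "y \<in> D" "y < d + 1 / (real n + 1)" using cInf_lessD[OF D0] by blast
    then show ?thesis by (auto simp: D_def)
  qed
  then obtain kk where kk: "\<And>n. kk n \<in> K" "\<And>n. (norm (x - kk n))^2 < d + 1 / (real n + 1)"
    by metis
  have cauchy: "Cauchy kk"
  proof (rule metric_CauchyI)
    fix e :: real assume e: "e > 0"
    obtain N :: nat where N: "4 / e^2 < real N" using reals_Archimedean2 by blast
    have "dist (kk m) (kk n) < e" if mn: "m \<ge> N" "n \<ge> N" for m n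
    proof -
      define u where "u = x - kk m"
      define v where "v = x - kk n"
      define mid where "mid = (1/2::real) *\<^sub>R (kk m + kk n)"
      have midK: "mid \<in> K" unfolding mid_def using kk(1) Ks by (simp add: csubspace_scaleR csubspace_add)
      have "u + v = 2 *\<^sub>R (x - mid)" by (simp add: u_def v_def mid_def algebra_simps scaleR_2)
      then have nuv: "(norm (u + v))^2 = 4 * (norm (x - mid))^2"
        by (simp add: power_mult_distrib)
      have "u - v = kk n - kk m" by (simp add: u_def v_def)
      then have "(norm (kk n - kk m))^2 = 2 * (norm u)^2 + 2 * (norm v)^2 - 4 * (norm (x - mid))^2"
        using parallelogram[of u v] nuv by simp
      also have "\<dots> \<le> 2 * (d + 1 / (real m + 1)) + 2 * (d + 1 / (real n + 1)) - 4 * d"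
        unfolding u_def v_def by (rule lin_aux[OF kk(2)[of m] kk(2)[of n] dle[OF midK]])
      also have "\<dots> = 2 / (real m + 1) + 2 / (real n + 1)" by simp
      also have "\<dots> \<le> 2 / (real N + 1) + 2 / (real N + 1)"
        using mn by (intro add_mono divide_left_mono) auto
      also have "\<dots> < e^2"
      proof -
        have "4 / e^2 < real N + 1" using N by simp
        then have "4 < e^2 * (real N + 1)" using e by (simp add: field_simps)
        moreover have "real N + 1 > 0" by simp
        ultimately have "4 / (real N + 1) < e^2" by (simp add: divide_less_eq mult.commute)
        then show ?thesis by simp
      qed
      finally have "(norm (kk n - kk m))^2 < e^2" .
      then have "norm (kk n - kk m) < e" using e by (simp add: power_less_imp_less_base)
      then show ?thesis by (simp add: dist_norm norm_minus_commute)
    qed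
    then show "\<exists>M. \<forall>m\<ge>M. \<forall>n\<ge>M. dist (kk m) (kk n) < e" by blast
  qed
  then obtain p where p: "kk \<longlonglongrightarrow> p" using Cauchy_convergent_iff convergent_def by blast
  have pK: "p \<in> K" using closed_sequentially[OF Kc] kk(1) p by blast
  have pmin: "(norm (x - p))^2 \<le> d"
  proof (rule tendsto_le[OF sequentially_bot])
    show "(\<lambda>n. (norm (x - kk n))^2) \<longlonglongrightarrow> (norm (x - p))^2"
      by (intro tendsto_intros p)
    show "(\<lambda>n. d + 1 / (real n + 1)) \<longlonglongrightarrow> d"
      using tendsto_add[OF tendsto_const LIMSEQ_inverse_real_of_nat_add[of 0]]
      by (simp add: inverse_eq_divide add.commute)
    show "\<forall>\<^sub>F n in sequentially. (norm (x - kk n))^2 \<le> d + 1 / (real n + 1)"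
      by (intro always_eventually allI less_imp_le kk(2))
  qed
  have "cinner (x - p) k = 0" if k: "k \<in> K" for k
  proof (rule orth_from_min)
    fix t :: complex
    have "p + t *\<^sub>C k \<in> K" using pK k Ks by (simp add: csubspace_add csubspace_scaleC)
    then have "d \<le> (norm (x - (p + t *\<^sub>C k)))^2" by (rule dle)
    moreover have "x - (p + t *\<^sub>C k) = (x - p) - t *\<^sub>C k" by simp
    ultimately have "d \<le> (norm (x - p - t *\<^sub>C k))^2" by simp
    then show "(norm (x - p))^2 \<le> (norm (x - p - t *\<^sub>C k))^2" by (rule order_trans[OF pmin])
  qed
  then show ?thesis using pK cinner_eq_zero_sym by blast
qed

lemma bounded_linear_scaleC_left: "bounded_linear (\<lambda>a::complex. a *\<^sub>C (d::'a::complex_normed_vector))"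
proof (rule bounded_linear_intro[where K="norm d"])
  show "(a + b) *\<^sub>C d = a *\<^sub>C d + b *\<^sub>C d" for a b by (rule scaleC_add_left)
  show "(r *\<^sub>R a) *\<^sub>C d = r *\<^sub>R (a *\<^sub>C d)" for r a
    by (simp only: scaleR_scaleC scaleC_scaleC scaleC_complex_def)
  show "norm (a *\<^sub>C d) \<le> norm a * norm d" for a
    by (simp only: norm_scaleC order_refl)
qed

lemma cspan_closed_seq:
  fixes C :: "'a::chilbert_space set"
  assumes seq: "\<And>f::nat \<Rightarrow> 'a. (\<forall>n. f n \<in> cspan C) \<Longrightarrow> (\<exists>K. \<forall>n. norm (f n) \<le> K) \<Longrightarrow>
      \<exists>l\<in>cspan C. \<exists>r. strict_mono r \<and> (f \<circ> r) \<longlonglongrightarrow> l"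
  shows "closed (cspan C)"
  unfolding closed_sequential_limits
proof (intro allI impI, elim conjE)
  fix x :: "nat \<Rightarrow> 'a" and l assume x: "\<forall>n. x n \<in> cspan C" and l: "x \<longlonglongrightarrow> l"
  have "bounded (range x)" using convergent_imp_bounded[OF l] .
  then obtain K where K: "\<forall>y\<in>range x. norm y \<le> K" unfolding bounded_iff by blast
  then have "\<forall>n. norm (x n) \<le> K" by simp
  then obtain l' r where l': "l' \<in> cspan C" "strict_mono r" "(x \<circ> r) \<longlonglongrightarrow> l'" using seq[of x, OF x] by blast
  have "(x \<circ> r) \<longlonglongrightarrow> l" using LIMSEQ_subseq_LIMSEQ[OF l l'(2)] .
  then have "l = l'" using l'(3) LIMSEQ_unique by blast
  then show "l \<in> cspan C" using l'(1) by simp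
qed

lemma fd_bounded_subseq:
  fixes C :: "'a::chilbert_space set"
  assumes "finite C"
  shows "\<forall>f::nat \<Rightarrow> 'a. (\<forall>n. f n \<in> cspan C) \<longrightarrow> (\<exists>K. \<forall>n. norm (f n) \<le> K) \<longrightarrow>
      (\<exists>l\<in>cspan C. \<exists>r. strict_mono r \<and> (f \<circ> r) \<longlonglongrightarrow> l)"
  using assms
proof (induct C rule: finite_induct)
  case empty
  show ?case
  proof (intro allI impI)
    fix f :: "nat \<Rightarrow> 'a" assume "\<forall>n. f n \<in> cspan {}" and "\<exists>K. \<forall>n. norm (f n) \<le> K"
    then have "\<forall>n. f n = 0" by (simp add: cspan_eq)
    then have "(f \<circ> id) \<longlonglongrightarrow> 0" by (simp add: o_def)
    moreover have "(0::'a) \<in> cspan {}" by (simp add: cspan_eq)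
    ultimately show "\<exists>l\<in>cspan {}. \<exists>r. strict_mono r \<and> (f \<circ> r) \<longlonglongrightarrow> l"
      using strict_mono_id by blast
  qed
next
  case (insert c C)
  define V where "V = cspan C"
  have IH: "\<And>f::nat \<Rightarrow> 'a. (\<forall>n. f n \<in> V) \<Longrightarrow> (\<exists>K. \<forall>n. norm (f n) \<le> K) \<Longrightarrow>
      \<exists>l\<in>V. \<exists>r. strict_mono r \<and> (f \<circ> r) \<longlonglongrightarrow> l"
    using insert(3) unfolding V_def by blast
  have Vs: "csubspace V" unfolding V_def cspan_eq csubspace_eq by simp
  have Vc: "closed V" unfolding V_def by (rule cspan_closed_seq) (use IH[unfolded V_def] in blast)
  have VC: "closed_csubspace V" using Vs Vc by (simp add: closed_csubspace_def)
  obtain p where p: "p \<in> V" "\<forall>k\<in>V. cinner k (c - p) = 0" using projection_exists[OF VC] by blast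
  define d where "d = c - p"
  have Vsub: "V \<subseteq> cspan (insert c C)" unfolding V_def cspan_eq by (rule cvs.span_mono) auto
  have dspan: "d \<in> cspan (insert c C)"
  proof -
    have "c \<in> cspan (insert c C)" unfolding cspan_eq by (rule cvs.span_base) simp
    then show ?thesis unfolding d_def using p(1) Vsub by (simp add: cspan_eq cvs.span_diff subsetD)
  qed
  show ?case
  proof (intro allI impI)
    fix f :: "nat \<Rightarrow> 'a" assume f: "\<forall>n. f n \<in> cspan (insert c C)" and "\<exists>K. \<forall>n. norm (f n) \<le> K"
    then obtain K where K: "\<And>n. norm (f n) \<le> K" by blast
    have "\<forall>n. \<exists>a. f n - a *\<^sub>C c \<in> V" using f unfolding V_def cspan_eq cvs.span_breakdown_eq by blast
    then obtain al where al: "\<And>n. f n - al n *\<^sub>C c \<in> V" by metis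
    define w where "w n = f n - al n *\<^sub>C d" for n
    have wV: "w n \<in> V" for n
    proof -
      have "w n = (f n - al n *\<^sub>C c) + al n *\<^sub>C p"
        by (simp add: w_def d_def scaleC_diff_right)
      then show ?thesis using al[of n] p(1) Vs by (simp add: csubspace_add csubspace_scaleC)
    qed
    have fw: "f n = w n + al n *\<^sub>C d" for n by (simp add: w_def)
    have orth: "cinner (w n) (al n *\<^sub>C d) = 0" for n
      using p(2) wV by (simp add: cinner_scaleC_right d_def)
    have nf: "(norm (f n))^2 = (norm (w n))^2 + (norm (al n *\<^sub>C d))^2" for n
      unfolding fw by (rule pythagoras[OF orth])
    have wK: "norm (w n) \<le> K" for n
    proof -
      have "(norm (w n))^2 \<le> (norm (f n))^2" using nf[of n] by simp
      then have "norm (w n) \<le> norm (f n)" using power2_le_imp_le norm_ge_zero by blast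
      then show ?thesis using K[of n] by linarith
    qed
    show "\<exists>l\<in>cspan (insert c C). \<exists>r. strict_mono r \<and> (f \<circ> r) \<longlonglongrightarrow> l"
    proof (cases "d = 0")
      case True
      then have "\<forall>n. f n \<in> V" using fw wV by simp
      then obtain l r where "l \<in> V" "strict_mono r" "(f \<circ> r) \<longlonglongrightarrow> l" using IH K by blast
      then show ?thesis using Vsub by blast
    next
      case False
      have alK: "cmod (al n) \<le> K / norm d" for n
      proof -
        have "(norm (al n *\<^sub>C d))^2 \<le> (norm (f n))^2" using nf[of n] by simp
        then have "norm (al n *\<^sub>C d) \<le> norm (f n)" using power2_le_imp_le norm_ge_zero by blast
        then have "cmod (al n) * norm d \<le> K" using K[of n] by (simp add: norm_scaleC)
        then show ?thesis using False by (simp add: field_simps)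
      qed
      have "bounded (range al)" unfolding bounded_iff using alK by blast
      then obtain a r1 where r1: "strict_mono r1" "(al \<circ> r1) \<longlonglongrightarrow> a"
        using bounded_imp_convergent_subsequence by blast
      have "\<forall>n. (w \<circ> r1) n \<in> V" using wV by simp
      moreover have "\<exists>K. \<forall>n. norm ((w \<circ> r1) n) \<le> K" using wK by auto
      ultimately obtain l2 r2 where r2: "l2 \<in> V" "strict_mono r2" "((w \<circ> r1) \<circ> r2) \<longlonglongrightarrow> l2"
        using IH by blast
      have a2: "((al \<circ> r1) \<circ> r2) \<longlonglongrightarrow> a" using LIMSEQ_subseq_LIMSEQ[OF r1(2) r2(2)] .
      have "(\<lambda>n. ((w \<circ> r1) \<circ> r2) n + (((al \<circ> r1) \<circ> r2) n) *\<^sub>C d) \<longlonglongrightarrow> l2 + a *\<^sub>C d"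
        by (intro tendsto_add r2(3) bounded_linear.tendsto[OF bounded_linear_scaleC_left a2])
      moreover have "(\<lambda>n. ((w \<circ> r1) \<circ> r2) n + (((al \<circ> r1) \<circ> r2) n) *\<^sub>C d) = f \<circ> (r1 \<circ> r2)"
        by (rule ext) (simp add: fw)
      ultimately have "(f \<circ> (r1 \<circ> r2)) \<longlonglongrightarrow> l2 + a *\<^sub>C d" by simp
      moreover have "strict_mono (r1 \<circ> r2)" using r1(1) r2(2) by (rule strict_mono_o)
      moreover have "l2 + a *\<^sub>C d \<in> cspan (insert c C)"
        using r2(1) Vsub dspan unfolding cspan_eq by (intro cvs.span_add cvs.span_scale) auto
      ultimately show ?thesis by blast
    qed
  qed
qed

lemma cfinite_dim_csubspace: "cfinite_dim W \<Longrightarrow> csubspace W"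
  unfolding cfinite_dim_def csubspace_eq cspan_eq by auto

lemma fd_sphere_compact:
  fixes W :: "'a::chilbert_space set"
  assumes W: "cfinite_dim W"
  shows "compact {z\<in>W. norm z = 1}"
proof -
  obtain C where C: "finite C" "cspan C = W" using W cfinite_dim_def by blast
  show ?thesis unfolding compact_eq_seq_compact_metric
  proof (rule seq_compactI)
    fix f :: "nat \<Rightarrow> 'a" assume f: "\<forall>n. f n \<in> {z \<in> W. norm z = 1}"
    then have "\<forall>n. f n \<in> cspan C" "\<exists>K. \<forall>n. norm (f n) \<le> K" using C by auto
    then obtain l r where lr: "l \<in> cspan C" "strict_mono r" "(f \<circ> r) \<longlonglongrightarrow> l"
      using fd_bounded_subseq[OF C(1)] by blast
    have "(\<lambda>n. norm ((f \<circ> r) n)) \<longlonglongrightarrow> norm l" by (intro tendsto_norm lr(3))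
    moreover have "(\<lambda>n. norm ((f \<circ> r) n)) = (\<lambda>n. 1)" using f by auto
    ultimately have "(\<lambda>n. 1::real) \<longlonglongrightarrow> norm l" by simp
    then have "norm l = 1" using LIMSEQ_unique[OF _ tendsto_const] by blast
    then show "\<exists>l\<in>{z \<in> W. norm z = 1}. \<exists>r. strict_mono r \<and> (f \<circ> r) \<longlonglongrightarrow> l"
      using lr C(2) by blast
  qed
qed

lemma fd_attains:
  fixes W :: "'a::chilbert_space set" and g :: "'a \<Rightarrow> real"
  assumes W: "cfinite_dim W" and nz: "W \<noteq> {0}" and g: "continuous_on UNIV g"
  shows "\<exists>z\<in>W. norm z = 1 \<and> (\<forall>y\<in>W. norm y = 1 \<longrightarrow> g y \<le> g z)"
    and "\<exists>z\<in>W. norm z = 1 \<and> (\<forall>y\<in>W. norm y = 1 \<longrightarrow> g z \<le> g y)"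
proof -
  have Ws: "csubspace W" using W by (rule cfinite_dim_csubspace)
  obtain w where w: "w \<in> W" "w \<noteq> 0" using nz csubspace_0[OF Ws] by blast
  have "(1 / norm w) *\<^sub>R w \<in> {z\<in>W. norm z = 1}" using w Ws by (simp add: csubspace_scaleR)
  then have ne: "{z\<in>W. norm z = 1} \<noteq> {}" by blast
  have cg: "continuous_on {z\<in>W. norm z = 1} g" using g continuous_on_subset by blast
  show "\<exists>z\<in>W. norm z = 1 \<and> (\<forall>y\<in>W. norm y = 1 \<longrightarrow> g y \<le> g z)"
    using continuous_attains_sup[OF fd_sphere_compact[OF W] ne cg] by blast
  show "\<exists>z\<in>W. norm z = 1 \<and> (\<forall>y\<in>W. norm y = 1 \<longrightarrow> g z \<le> g y)"
    using continuous_attains_inf[OF fd_sphere_compact[OF W] ne cg] by blast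
qed

lemma attain_core:
  fixes q :: "'a::real_normed_vector \<Rightarrow> real"
  assumes decomp: "\<And>x. x \<in> M \<Longrightarrow> \<exists>y\<in>M0. \<exists>z\<in>W. x = y + z \<and> (norm x)^2 = (norm y)^2 + (norm z)^2
                      \<and> q x = c * (norm y)^2 + q z"
    and M0M: "M0 \<subseteq> M" and WM: "W \<subseteq> M"
    and qM0: "\<And>y. y \<in> M0 \<Longrightarrow> q y = c * (norm y)^2"
    and Wmax: "W \<noteq> {0} \<Longrightarrow> \<exists>z0\<in>W. norm z0 = 1 \<and> (\<forall>z\<in>W. q z \<le> q z0 * (norm z)^2)"
    and M0u: "M0 \<noteq> {0} \<Longrightarrow> \<exists>y0\<in>M0. norm y0 = 1"
    and Mnz: "\<exists>x\<in>M. x \<noteq> 0" and M00: "0 \<in> M0" and W0: "0 \<in> W"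
  shows "\<exists>x0\<in>M. norm x0 = 1 \<and> (\<forall>x\<in>M. norm x = 1 \<longrightarrow> q x \<le> q x0)"
proof (cases "M0 = {0}")
  case True
  have MW: "x \<in> W" if xM: "x \<in> M" for x
  proof -
    obtain y z where "y \<in> M0" "z \<in> W" "x = y + z" using decomp[OF xM] by blast
    then show ?thesis using True by simp
  qed
  have "W \<noteq> {0}" using Mnz MW by blast
  then obtain z0 where z0: "z0 \<in> W" "norm z0 = 1" "\<forall>z\<in>W. q z \<le> q z0 * (norm z)^2" using Wmax by blast
  show ?thesis
  proof (intro bexI conjI ballI impI)
    show "z0 \<in> M" using z0(1) WM by blast
    show "norm z0 = 1" by (rule z0(2))
    fix x assume "x \<in> M" "norm x = 1"
    then show "q x \<le> q z0" using z0(3) MW by fastforce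
  qed
next
  case False
  then obtain y0 where y0: "y0 \<in> M0" "norm y0 = 1" using M0u by blast
  have qy0: "q y0 = c" using qM0[OF y0(1)] y0(2) by simp
  show ?thesis
  proof (cases "W = {0}")
    case True
    show ?thesis
    proof (intro bexI conjI ballI impI)
      show "y0 \<in> M" using y0(1) M0M by blast
      show "norm y0 = 1" by (rule y0(2))
      fix x assume x: "x \<in> M" "norm x = 1"
      obtain y z where "y \<in> M0" "z \<in> W" "x = y + z" using decomp[OF x(1)] by blast
      then have "x \<in> M0" using True by simp
      then show "q x \<le> q y0" using qM0 x(2) qy0 by simp
    qed
  next
    case False
    then obtain z0 where z0: "z0 \<in> W" "norm z0 = 1" "\<forall>z\<in>W. q z \<le> q z0 * (norm z)^2" using Wmax by blast
    define x0 where "x0 = (if q z0 \<le> c then y0 else z0)"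
    have qx0: "q x0 = max c (q z0)" using qy0 by (simp add: x0_def)
    show ?thesis
    proof (intro bexI conjI ballI impI)
      show "x0 \<in> M" using z0(1) WM y0(1) M0M by (auto simp: x0_def)
      show "norm x0 = 1" using z0(2) y0(2) by (simp add: x0_def)
      fix x assume x: "x \<in> M" "norm x = 1"
      obtain y z where yz: "y \<in> M0" "z \<in> W" "x = y + z" "(norm x)^2 = (norm y)^2 + (norm z)^2"
        "q x = c * (norm y)^2 + q z" using decomp[OF x(1)] by blast
      have "q x \<le> c * (norm y)^2 + q z0 * (norm z)^2" using yz(5) z0(3) yz(2) by fastforce
      also have "\<dots> \<le> max c (q z0) * (norm y)^2 + max c (q z0) * (norm z)^2"
        by (intro add_mono mult_right_mono) auto
      also have "\<dots> = max c (q z0) * ((norm y)^2 + (norm z)^2)" by (simp only: distrib_left)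
      also have "\<dots> = max c (q z0)" using yz(4) x(2) by simp
      finally show "q x \<le> q x0" using qx0 by simp
    qed
  qed
qed

lemma orth_span:
  fixes y :: "'a::complex_inner"
  assumes "\<forall>b\<in>B. cinner b y = 0" and "x \<in> cspan B"
  shows "cinner y x = 0"
proof -
  have "cvs.subspace {x. cinner y x = 0}"
    using csubspace_orth[of "{y}"] by (simp add: csubspace_eq)
  moreover have "B \<subseteq> {x. cinner y x = 0}" using assms(1) cinner_eq_zero_sym by blast
  ultimately have "cvs.span B \<subseteq> {x. cinner y x = 0}" by (rule cvs.span_minimal[rotated])
  then show ?thesis using assms(2) by (auto simp: cspan_eq)
qed

lemma peel_many:
  fixes V :: "'a::complex_inner set"
  assumes "finite B"
  shows "csubspace V \<Longrightarrow> cfinite_dim (V \<inter> {x. \<forall>b\<in>B. cinner b x = 0}) \<Longrightarrow> cfinite_dim V"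
  using assms
proof (induct B arbitrary: V rule: finite_induct)
  case empty then show ?case by simp
next
  case (insert b B)
  define V' where "V' = V \<inter> {x. cinner b x = 0}"
  have V's: "csubspace V'" unfolding V'_def using insert(4) csubspace_orth[of "{b}"]
    by (intro csubspace_Int) auto
  have "V' \<inter> {x. \<forall>b\<in>B. cinner b x = 0} = V \<inter> {x. \<forall>b'\<in>insert b B. cinner b' x = 0}"
    by (auto simp: V'_def)
  then have "cfinite_dim V'" using insert(3)[OF V's] insert(5) by simp
  moreover have "clinear (cinner b)"
    by (rule clinear_functional_complex) (simp_all add: cinner_add_right cinner_scaleC_right)
  ultimately show ?case using inf_dim_kernel[OF insert(4)] unfolding V'_def by blast
qed

lemma scale_q:
  fixes T :: "'a::complex_normed_vector \<Rightarrow> 'b::complex_normed_vector"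
  assumes T: "clinear T" and z: "z \<noteq> 0"
  shows "(norm (T z))^2 = (norm (T ((1 / norm z) *\<^sub>R z)))^2 * (norm z)^2"
proof -
  have "T ((1 / norm z) *\<^sub>R z) = (1 / norm z) *\<^sub>R T z" by (rule clinear_scaleR[OF T])
  then have "norm (T ((1 / norm z) *\<^sub>R z)) = norm (T z) / norm z" by simp
  then show ?thesis using z by (simp add: power_divide)
qed

lemma easy_abstract:
  fixes T F :: "'a::chilbert_space \<Rightarrow> 'a"
  assumes T: "cbounded_linear T" and F: "cbounded_linear F" and B: "finite B"
    and FB: "range F \<subseteq> cspan B"
    and h1: "\<And>y. F y = 0 \<Longrightarrow> \<forall>b\<in>B. cinner b y = 0 \<Longrightarrow> T y = c *\<^sub>R y"
    and h2: "\<And>y z. F y = 0 \<Longrightarrow> \<forall>b\<in>B. cinner b y = 0 \<Longrightarrow> cinner y z = 0 \<Longrightarrow> cinner y (T z) = 0"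
    and c: "c * c = c"
    and M: "closed_csubspace M" and Mnz: "M \<noteq> {0}"
  shows "norm_attaining_on T M \<and> min_attaining_on T M"
proof -
  have Tl: "clinear T" using T by (rule cbl_clinear)
  have Fl: "clinear F" using F by (rule cbl_clinear)
  define N0 where "N0 = {x. F x = 0} \<inter> {x. \<forall>b\<in>B. cinner b x = 0}"
  have N0c: "closed_csubspace N0" unfolding N0_def closed_csubspace_def
    using csubspace_Int[OF csubspace_kernel[OF Fl] csubspace_orth] closed_Int[OF closed_kernel[OF F] closed_orth]
    by simp
  have Ms: "csubspace M" and Mc: "closed M" using M by (auto simp: closed_csubspace_def)
  define M0 where "M0 = M \<inter> N0"
  have M0c: "closed_csubspace M0" unfolding M0_def using M N0c
    by (auto simp: closed_csubspace_def intro: csubspace_Int closed_Int)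
  define W where "W = M \<inter> {z. \<forall>y\<in>M0. cinner y z = 0}"
  have Ws: "csubspace W" unfolding W_def using Ms csubspace_orth by (rule csubspace_Int)
  have key: "(norm (T (y + z)))^2 = c * (norm y)^2 + (norm (T z))^2" if y: "y \<in> N0" and yz: "cinner y z = 0" for y z
  proof -
    have Ty: "T y = c *\<^sub>R y" using y h1 by (auto simp: N0_def)
    have o: "cinner (T y) (T z) = 0" using y yz h2 by (auto simp: N0_def Ty cinner_scaleR_left)
    have "(norm (T (y + z)))^2 = (norm (T y))^2 + (norm (T z))^2"
      unfolding clinear_add[OF Tl] by (rule pythagoras[OF o])
    moreover have "(norm (T y))^2 = c * (norm y)^2" unfolding Ty
      using c by (simp add: power_mult_distrib power2_eq_square)
    ultimately show ?thesis by simp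
  qed
  have decomp: "\<exists>y\<in>M0. \<exists>z\<in>W. x = y + z \<and> (norm x)^2 = (norm y)^2 + (norm z)^2
       \<and> (norm (T x))^2 = c * (norm y)^2 + (norm (T z))^2" if x: "x \<in> M" for x
  proof -
    obtain p where p: "p \<in> M0" "\<forall>k\<in>M0. cinner k (x - p) = 0" using projection_exists[OF M0c] by blast
    have pM: "p \<in> M" using p(1) by (simp add: M0_def)
    have zW: "x - p \<in> W" unfolding W_def using p(2) x pM Ms by (simp add: csubspace_diff)
    have o: "cinner p (x - p) = 0" using p by blast
    have e: "x = p + (x - p)" by simp
    show ?thesis
    proof (intro bexI conjI)
      show "x = p + (x - p)" by simp
      show "(norm x)^2 = (norm p)^2 + (norm (x - p))^2" using pythagoras[OF o] e by simp
      show "(norm (T x))^2 = c * (norm p)^2 + (norm (T (x - p)))^2"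
        using key[of p "x - p"] p(1) o e by (simp add: M0_def)
    qed (use p zW in auto)
  qed
  have WN0: "W \<inter> N0 = {0}"
  proof -
    have "z = 0" if "z \<in> W" "z \<in> N0" for z
    proof -
      have "z \<in> M0" using that by (simp add: W_def M0_def)
      then have "cinner z z = 0" using that(1) by (simp add: W_def)
      then show ?thesis by (rule cinner_eq_zero_iff[THEN iffD1])
    qed
    moreover have "0 \<in> W \<inter> N0" using Ws N0c by (simp add: csubspace_0 closed_csubspace_def)
    ultimately show ?thesis by blast
  qed
  have Wfd: "cfinite_dim W"
  proof -
    have WF: "csubspace (W \<inter> {x. F x = 0})" using Ws csubspace_kernel[OF Fl] by (rule csubspace_Int)
    have "(W \<inter> {x. F x = 0}) \<inter> {x. \<forall>b\<in>B. cinner b x = 0} = {0}" using WN0 by (auto simp: N0_def)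
    moreover have "cfinite_dim {0::'a}" unfolding cfinite_dim_def
      by (rule exI[of _ "{}"]) (simp add: cspan_eq)
    ultimately have "cfinite_dim (W \<inter> {x. F x = 0})" using peel_many[OF B WF] by simp
    moreover have "F ` W \<subseteq> cspan B" using FB by blast
    ultimately show ?thesis using fd_peel[OF Ws Fl B] by blast
  qed
  define q where "q x = (norm (T x))^2" for x
  have qc: "continuous_on UNIV q" unfolding q_def
    by (intro continuous_intros cbl_continuous[OF T])
  have M0M: "M0 \<subseteq> M" and WM: "W \<subseteq> M" by (auto simp: M0_def W_def)
  have qM0: "q y = c * (norm y)^2" if "y \<in> M0" for y
    using key[of y 0] that by (simp add: M0_def q_def clinear_zero[OF Tl])
  have M0u: "\<exists>y0\<in>M0. norm y0 = 1" if M0nz: "M0 \<noteq> {0}"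
  proof -
    obtain y where y: "y \<in> M0" "y \<noteq> 0" using M0nz M0c by (auto simp: closed_csubspace_def csubspace_def)
    then have "(1 / norm y) *\<^sub>R y \<in> M0" using M0c by (simp add: closed_csubspace_def csubspace_scaleR)
    then show ?thesis using y(2) by (intro bexI[of _ "(1 / norm y) *\<^sub>R y"]) auto
  qed
  have Mnz': "\<exists>x\<in>M. x \<noteq> 0" using Mnz Ms csubspace_0 by blast
  have M00: "0 \<in> M0" and W0: "0 \<in> W" using M0c Ws by (auto simp: closed_csubspace_def csubspace_0)
  have Wext: "\<exists>z0\<in>W. norm z0 = 1 \<and> (\<forall>z\<in>W. s * q z \<le> s * q z0 * (norm z)^2)"
    if Wnz: "W \<noteq> {0}" and s: "s = 1 \<or> s = -1" for s
  proof -
    have sc: "continuous_on UNIV (\<lambda>x. s * q x)" by (intro continuous_intros qc)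
    obtain z0 where z0: "z0 \<in> W" "norm z0 = 1" "\<forall>y\<in>W. norm y = 1 \<longrightarrow> s * q y \<le> s * q z0"
      using fd_attains(1)[OF Wfd Wnz sc] by blast
    have "s * q z \<le> s * q z0 * (norm z)^2" if z: "z \<in> W" for z
    proof (cases "z = 0")
      case True then show ?thesis by (simp add: q_def clinear_zero[OF Tl])
    next
      case False
      define u where "u = (1 / norm z) *\<^sub>R z"
      have "u \<in> W" "norm u = 1" using z False Ws by (auto simp: u_def csubspace_scaleR)
      then have "s * q u \<le> s * q z0" using z0(3) by blast
      then have "s * q u * (norm z)^2 \<le> s * q z0 * (norm z)^2" by (simp add: mult_right_mono)
      moreover have "q z = q u * (norm z)^2" unfolding q_def u_def using scale_q[OF Tl False] .
      ultimately show ?thesis by (simp add: algebra_simps)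
    qed
    then show ?thesis using z0 by blast
  qed
  have sup: "\<exists>x0\<in>M. norm x0 = 1 \<and> (\<forall>x\<in>M. norm x = 1 \<longrightarrow> q x \<le> q x0)"
  proof (rule attain_core[OF _ M0M WM, where c=c])
    show "\<exists>y\<in>M0. \<exists>z\<in>W. x = y + z \<and> (norm x)^2 = (norm y)^2 + (norm z)^2 \<and> q x = c * (norm y)^2 + q z"
      if "x \<in> M" for x using decomp[OF that] by (simp add: q_def)
    show "W \<noteq> {0} \<Longrightarrow> \<exists>z0\<in>W. norm z0 = 1 \<and> (\<forall>z\<in>W. q z \<le> q z0 * (norm z)^2)"
      using Wext[of 1] by simp
  qed (use qM0 M0u Mnz' M00 W0 in auto)
  have inf: "\<exists>x0\<in>M. norm x0 = 1 \<and> (\<forall>x\<in>M. norm x = 1 \<longrightarrow> - q x \<le> - q x0)"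
  proof (rule attain_core[OF _ M0M WM, where c="-c"])
    show "\<exists>y\<in>M0. \<exists>z\<in>W. x = y + z \<and> (norm x)^2 = (norm y)^2 + (norm z)^2 \<and> - q x = - c * (norm y)^2 + - q z"
      if xM: "x \<in> M" for x
    proof -
      obtain y z where yz: "y \<in> M0" "z \<in> W" "x = y + z" "(norm x)^2 = (norm y)^2 + (norm z)^2"
        "(norm (T x))^2 = c * (norm y)^2 + (norm (T z))^2" using decomp[OF xM] by blast
      have "- q x = - c * (norm y)^2 + - q z" using yz(5) by (simp add: q_def)
      then show ?thesis using yz by blast
    qed
    show "W \<noteq> {0} \<Longrightarrow> \<exists>z0\<in>W. norm z0 = 1 \<and> (\<forall>z\<in>W. - q z \<le> - q z0 * (norm z)^2)"
      using Wext[of "-1"] by simp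
  qed (use qM0 M0u Mnz' M00 W0 in auto)
  obtain x1 where x1: "x1 \<in> M" "norm x1 = 1" "\<forall>x\<in>M. norm x = 1 \<longrightarrow> q x \<le> q x1" using sup by blast
  obtain x2 where x2: "x2 \<in> M" "norm x2 = 1" "\<forall>x\<in>M. norm x = 1 \<longrightarrow> q x2 \<le> q x" using inf by auto
  have "norm_on T M = norm (T x1)" unfolding norm_on_def
  proof (rule cSup_eq_maximum)
    show "norm (T x1) \<in> {norm (T x) |x. x \<in> M \<and> norm x = 1}" using x1 by blast
    fix v assume "v \<in> {norm (T x) |x. x \<in> M \<and> norm x = 1}"
    then obtain x where "x \<in> M" "norm x = 1" "v = norm (T x)" by blast
    then have "(norm (T x))^2 \<le> (norm (T x1))^2" using x1(3) by (simp add: q_def)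
    then show "v \<le> norm (T x1)" using \<open>v = norm (T x)\<close> power2_le_imp_le norm_ge_zero by blast
  qed
  moreover have "min_modulus_on T M = norm (T x2)" unfolding min_modulus_on_def
  proof (rule cInf_eq_minimum)
    show "norm (T x2) \<in> {norm (T x) |x. x \<in> M \<and> norm x = 1}" using x2 by blast
    fix v assume "v \<in> {norm (T x) |x. x \<in> M \<and> norm x = 1}"
    then obtain x where "x \<in> M" "norm x = 1" "v = norm (T x)" by blast
    then have "(norm (T x2))^2 \<le> (norm (T x))^2" using x2(3) by (simp add: q_def)
    then show "norm (T x2) \<le> v" using \<open>v = norm (T x)\<close> power2_le_imp_le norm_ge_zero by blast
  qed
  ultimately show ?thesis unfolding norm_attaining_on_def min_attaining_on_def using x1 x2 by auto
qed

lemma cbl_id_minus: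
  fixes T :: "'a::complex_normed_vector \<Rightarrow> 'a"
  assumes T: "cbounded_linear T"
  shows "cbounded_linear (\<lambda>x. x - T x)"
proof -
  have Tl: "clinear T" using T by (rule cbl_clinear)
  obtain K where K: "\<forall>x. norm (T x) \<le> norm x * K" using T by (auto simp: cbounded_linear_def)
  have "clinear (\<lambda>x. x - T x)" unfolding clinear_def
  proof (intro conjI allI)
    show "x + y - T (x + y) = x - T x + (y - T y)" for x y by (simp add: clinear_add[OF Tl])
    show "c *\<^sub>C x - T (c *\<^sub>C x) = c *\<^sub>C (x - T x)" for c x
      by (simp add: clinear_scaleC[OF Tl] scaleC_diff_right)
  qed
  moreover have "norm (x - T x) \<le> norm x * (1 + K)" for x
  proof -
    have "norm (x - T x) \<le> norm x + norm (T x)" by (rule norm_triangle_ineq4)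
    also have "\<dots> \<le> norm x + norm x * K" using K by simp
    finally show ?thesis by (simp add: algebra_simps)
  qed
  ultimately show ?thesis unfolding cbounded_linear_def by blast
qed

lemma easy:
  fixes T :: "'a::chilbert_space \<Rightarrow> 'a"
  assumes T: "cbounded_linear T" and idem: "T \<circ> T = T"
    and fd: "cfinite_dim (range T) \<or> cfinite_dim {x. T x = 0}"
    and M: "closed_csubspace M" and Mnz: "M \<noteq> {0}"
  shows "norm_attaining_on T M \<and> min_attaining_on T M"
proof -
  have Tl: "clinear T" using T by (rule cbl_clinear)
  have TT: "T (T x) = T x" for x using fun_cong[OF idem, of x] by simp
  show ?thesis
  proof (cases "cfinite_dim (range T)")
    case True
    then obtain B where B: "finite B" "cspan B = range T" unfolding cfinite_dim_def by blast
    show ?thesis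
    proof (rule easy_abstract[OF T T B(1) _ _ _ _ M Mnz, where c=0])
      show "range T \<subseteq> cspan B" using B(2) by simp
      show "T y = 0 *\<^sub>R y" if "T y = 0" for y using that by simp
      show "cinner y (T z) = 0" if "\<forall>b\<in>B. cinner b y = 0" for y z
        using orth_span[OF that, of "T z"] B(2) by simp
    qed simp
  next
    case False
    then have "cfinite_dim {x. T x = 0}" using fd by simp
    then obtain B where B: "finite B" "cspan B = {x. T x = 0}" unfolding cfinite_dim_def by blast
    have FB: "x - T x \<in> cspan B" for x using B(2) TT clinear_diff[OF Tl] by simp
    show ?thesis
    proof (rule easy_abstract[OF T cbl_id_minus[OF T] B(1) _ _ _ _ M Mnz, where c=1])
      show "range (\<lambda>x. x - T x) \<subseteq> cspan B" using FB by blast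
      show "T y = 1 *\<^sub>R y" if "y - T y = 0" for y using that by simp
      show "cinner y (T z) = 0" if "\<forall>b\<in>B. cinner b y = 0" "cinner y z = 0" for y z
      proof -
        have "cinner y (z - T z) = 0" using orth_span[OF that(1) FB] .
        then show ?thesis using that(2) by (simp add: cinner_diff_right)
      qed
    qed simp
  qed
qed

definition Vset :: "('a::complex_inner \<Rightarrow> 'a) \<Rightarrow> (nat \<Rightarrow> 'a) \<Rightarrow> nat \<Rightarrow> 'a set" where
  "Vset S g n = {x. \<forall>j<n. cinner (g j) x = 0 \<and> cinner (S (g j)) (S x) = 0}"

lemma Vset_csubspace:
  assumes S: "clinear S"
  shows "csubspace (Vset S g n)"
  unfolding csubspace_def Vset_def
  by (auto simp: cinner_add_right cinner_scaleC_right clinear_add[OF S] clinear_scaleC[OF S] clinear_zero[OF S])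

lemma Vset_Suc: "Vset S g (Suc n) = Vset S g n \<inter> {x. cinner (g n) x = 0} \<inter> {x. cinner (S (g n)) (S x) = 0}"
  unfolding Vset_def by (auto simp: less_Suc_eq)

lemma inf_dim_Vset:
  fixes A :: "'a::complex_inner set"
  assumes A: "csubspace A" "\<not> cfinite_dim A" and S: "clinear S"
  shows "\<not> cfinite_dim (A \<inter> Vset S g n)"
proof (induct n)
  case 0
  have "Vset S g 0 = UNIV" by (simp add: Vset_def)
  then show ?case using A by simp
next
  case (Suc n)
  define A1 where "A1 = A \<inter> Vset S g n"
  have A1s: "csubspace A1" unfolding A1_def using A(1) Vset_csubspace[OF S] by (rule csubspace_Int)
  have l1: "clinear (cinner (g n))"
    by (rule clinear_functional_complex) (simp_all add: cinner_add_right cinner_scaleC_right)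
  have l2: "clinear (\<lambda>x. cinner (S (g n)) (S x))"
    by (rule clinear_functional_complex)
       (simp_all add: cinner_add_right cinner_scaleC_right clinear_add[OF S] clinear_scaleC[OF S])
  define A2 where "A2 = A1 \<inter> {x. cinner (g n) x = 0}"
  have A2s: "csubspace A2" unfolding A2_def using A1s csubspace_kernel[OF l1] by (rule csubspace_Int)
  have "\<not> cfinite_dim A2" unfolding A2_def using inf_dim_kernel[OF A1s l1] Suc unfolding A1_def by blast
  then have "\<not> cfinite_dim (A2 \<inter> {x. cinner (S (g n)) (S x) = 0})" using inf_dim_kernel[OF A2s l2] by blast
  moreover have "A2 \<inter> {x. cinner (S (g n)) (S x) = 0} = A \<inter> Vset S g (Suc n)"
    unfolding A2_def A1_def Vset_Suc by auto
  ultimately show ?case by simp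
qed

lemma unit_in:
  fixes A :: "'a::complex_inner set"
  assumes A: "csubspace A" "\<not> cfinite_dim A" and S: "clinear S"
  shows "\<exists>a\<in>A \<inter> Vset S g n. norm a = 1"
proof -
  have As: "csubspace (A \<inter> Vset S g n)" using A(1) Vset_csubspace[OF S] by (rule csubspace_Int)
  obtain a where a: "a \<in> A \<inter> Vset S g n" "a \<noteq> 0" using not_fd_nonzero[OF inf_dim_Vset[OF A S] As] by blast
  have "(1 / norm a) *\<^sub>R a \<in> A \<inter> Vset S g n" by (rule csubspace_scaleR[OF As a(1)])
  moreover have "norm ((1 / norm a) *\<^sub>R a) = 1" using a(2) by simp
  ultimately show ?thesis by blast
qed

lemma step_exists:
  fixes S T :: "'a::chilbert_space \<Rightarrow> 'a"
  assumes S: "cbounded_linear S" and T: "cbounded_linear T" and idem: "T \<circ> T = T"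
    and nR: "\<not> cfinite_dim (range T)" and nN: "\<not> cfinite_dim {x. T x = 0}"
    and low: "\<And>x. T x = 0 \<Longrightarrow> norm (S x) \<le> 1/8 * norm x"
    and high: "\<And>x. x \<in> range T \<Longrightarrow> 7/8 * norm x \<le> norm (S x)"
    and tau: "1/8 < \<tau>" "\<tau> < 7/8"
  shows "\<exists>x\<in>Vset S g n. norm x = 1 \<and> norm (S x) = \<tau>"
proof -
  have Sl: "clinear S" using S by (rule cbl_clinear)
  have Tl: "clinear T" using T by (rule cbl_clinear)
  have TT: "T (T x) = T x" for x using fun_cong[OF idem, of x] by simp
  have Vs: "csubspace (Vset S g n)" using Vset_csubspace[OF Sl] .
  obtain a where a: "a \<in> {x. T x = 0} \<inter> Vset S g n" "norm a = 1"
    using unit_in[OF csubspace_kernel[OF Tl] nN Sl] by blast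
  obtain b where b: "b \<in> range T \<inter> Vset S g n" "norm b = 1"
    using unit_in[OF csubspace_range[OF Tl] nR Sl] by blast
  have Ta: "T a = 0" using a(1) by simp
  have Tb: "T b = b" using b(1) TT by auto
  define p where "p s = (1 - s) *\<^sub>R a + s *\<^sub>R b" for s :: real
  have pV: "p s \<in> Vset S g n" for s
    unfolding p_def using a(1) b(1) Vs by (intro csubspace_add csubspace_scaleR) auto
  have Tp: "T (p s) = s *\<^sub>R b" for s
    unfolding p_def by (simp add: clinear_add[OF Tl] clinear_scaleR[OF Tl] Ta Tb)
  have pnz: "p s \<noteq> 0" for s
  proof
    assume "p s = 0"
    then have "s *\<^sub>R b = 0" using Tp[of s] clinear_zero[OF Tl] by simp
    then have "s = 0" using b(2) by auto
    then show False using \<open>p s = 0\<close> a(2) by (simp add: p_def)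
  qed
  define h where "h s = norm (S (p s)) / norm (p s)" for s
  have pc: "continuous_on {0..1} p" unfolding p_def by (intro continuous_intros)
  have hc: "continuous_on {0..1} h" unfolding h_def
  proof (intro continuous_on_divide continuous_on_norm)
    show "continuous_on {0..1} (\<lambda>s. S (p s))"
      using continuous_on_compose2[OF cbl_continuous[OF S] pc, of UNIV] by simp
    show "continuous_on {0..1} p" by (rule pc)
    show "\<forall>s\<in>{0..1}. norm (p s) \<noteq> 0" using pnz by simp
  qed
  have h0: "h 0 \<le> \<tau>" using low[OF Ta] a(2) tau by (simp add: h_def p_def)
  have h1: "\<tau> \<le> h 1" using high[of b] b tau by (simp add: h_def p_def)
  obtain s where s: "0 \<le> s" "s \<le> 1" "h s = \<tau>" using IVT'[of h 0 \<tau> 1, OF h0 h1 _ hc] by auto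
  define x where "x = (1 / norm (p s)) *\<^sub>R p s"
  have "x \<in> Vset S g n" unfolding x_def by (rule csubspace_scaleR[OF Vs pV])
  moreover have "norm x = 1" using pnz[of s] by (simp add: x_def)
  moreover have "norm (S x) = \<tau>"
  proof -
    have "S x = (1 / norm (p s)) *\<^sub>R S (p s)" unfolding x_def by (rule clinear_scaleR[OF Sl])
    then have "norm (S x) = h s" by (simp add: h_def)
    then show ?thesis using s(3) by simp
  qed
  ultimately show ?thesis by blast
qed

lemma Vset_cong: "(\<And>j. j < i \<Longrightarrow> g j = g' j) \<Longrightarrow> Vset S g i = Vset S g' i"
  unfolding Vset_def by auto

lemma seq_exists:
  fixes S T :: "'a::chilbert_space \<Rightarrow> 'a" and t :: "nat \<Rightarrow> real"
  assumes S: "cbounded_linear S" and T: "cbounded_linear T" and idem: "T \<circ> T = T"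
    and nR: "\<not> cfinite_dim (range T)" and nN: "\<not> cfinite_dim {x. T x = 0}"
    and low: "\<And>x. T x = 0 \<Longrightarrow> norm (S x) \<le> 1/8 * norm x"
    and high: "\<And>x. x \<in> range T \<Longrightarrow> 7/8 * norm x \<le> norm (S x)"
    and t: "\<And>n. 1/8 < t n \<and> t n < 7/8"
  shows "\<exists>u. (\<forall>n. norm (u n) = 1 \<and> norm (S (u n)) = t n) \<and>
             (\<forall>i j. j < i \<longrightarrow> cinner (u j) (u i) = 0 \<and> cinner (S (u j)) (S (u i)) = 0)"
proof -
  define P where "P n g \<longleftrightarrow> (\<forall>i<n. norm (g i) = 1 \<and> norm (S (g i)) = t i \<and> g i \<in> Vset S g i)"
    for n and g :: "nat \<Rightarrow> 'a"
  define Q where "Q n g g' \<longleftrightarrow> (\<forall>i<n. g' i = g i)" for n and g g' :: "nat \<Rightarrow> 'a"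
  have "\<exists>f. \<forall>n. P n (f n) \<and> Q n (f n) (f (Suc n))"
  proof (rule dependent_nat_choice)
    show "\<exists>x. P 0 x" by (simp add: P_def)
    fix g n assume Pg: "P n g"
    obtain x where x: "x \<in> Vset S g n" "norm x = 1" "norm (S x) = t n"
      using step_exists[OF S T idem nR nN low high, of "t n" g n] t[of n] by auto
    define g' where "g' = g(n := x)"
    have agree: "\<And>j. j < n \<Longrightarrow> g j = g' j" by (simp add: g'_def)
    have "P (Suc n) g'" unfolding P_def
    proof (intro allI impI)
      fix i assume i: "i < Suc n"
      show "norm (g' i) = 1 \<and> norm (S (g' i)) = t i \<and> g' i \<in> Vset S g' i"
      proof (cases "i = n")
        case True
        have "Vset S g' n = Vset S g n" using agree by (intro Vset_cong) simp
        then show ?thesis using x True by (simp add: g'_def)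
      next
        case False
        then have in_: "i < n" using i by simp
        have "Vset S g' i = Vset S g i" using agree in_ by (intro Vset_cong) simp
        then show ?thesis using Pg in_ False by (simp add: P_def g'_def)
      qed
    qed
    moreover have "Q n g g'" by (simp add: Q_def g'_def)
    ultimately show "\<exists>y. P (Suc n) y \<and> Q n g y" by blast
  qed
  then obtain f where f: "\<And>n. P n (f n)" "\<And>n. Q n (f n) (f (Suc n))" by blast
  have cons: "f (m + k) i = f m i" if "i < m" for i m k
  proof (induct k)
    case 0 then show ?case by simp
  next
    case (Suc k)
    have "f (Suc (m + k)) i = f (m + k) i" using f(2)[of "m + k"] that by (simp add: Q_def)
    then show ?case using Suc by simp
  qed
  define u where "u n = f (Suc n) n" for n
  have fu: "f (Suc n) j = u j" if "j < n" for j n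
  proof -
    have "f (Suc j + (n - j)) j = f (Suc j) j" by (rule cons) simp
    then show ?thesis using that by (simp add: u_def)
  qed
  have props: "norm (u n) = 1 \<and> norm (S (u n)) = t n \<and> u n \<in> Vset S u n" for n
  proof -
    have "norm (f (Suc n) n) = 1 \<and> norm (S (f (Suc n) n)) = t n \<and> f (Suc n) n \<in> Vset S (f (Suc n)) n"
      using f(1)[of "Suc n"] by (simp add: P_def)
    moreover have "Vset S (f (Suc n)) n = Vset S u n" using fu by (intro Vset_cong) simp
    ultimately show ?thesis by (simp add: u_def)
  qed
  show ?thesis
  proof (intro exI conjI allI impI)
    show "norm (u n) = 1" "norm (S (u n)) = t n" for n using props by auto
    fix i j :: nat assume "j < i"
    then show "cinner (u j) (u i) = 0" "cinner (S (u j)) (S (u i)) = 0"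
      using props[of i] by (auto simp: Vset_def)
  qed
qed

lemma sum_orth_norm:
  fixes v :: "nat \<Rightarrow> 'a::complex_inner"
  assumes orth: "\<And>i j. i \<noteq> j \<Longrightarrow> cinner (v i) (v j) = 0" and I: "finite I"
  shows "(norm (\<Sum>i\<in>I. a i *\<^sub>C v i))^2 = (\<Sum>i\<in>I. (cmod (a i))^2 * (norm (v i))^2)"
  using I
proof (induct I rule: finite_induct)
  case empty then show ?case by simp
next
  case (insert j I)
  have o: "cinner (a j *\<^sub>C v j) (\<Sum>i\<in>I. a i *\<^sub>C v i) = 0"
    unfolding cinner_sum_right
  proof (intro sum.neutral ballI)
    fix i assume "i \<in> I"
    then have "j \<noteq> i" using insert(2) by auto
    then show "cinner (a j *\<^sub>C v j) (a i *\<^sub>C v i) = 0" by (simp add: cinner_scaleC_left cinner_scaleC_right orth)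
  qed
  have "(norm (\<Sum>i\<in>insert j I. a i *\<^sub>C v i))^2 = (norm (a j *\<^sub>C v j + (\<Sum>i\<in>I. a i *\<^sub>C v i)))^2"
    using insert(1,2) by simp
  also have "\<dots> = (norm (a j *\<^sub>C v j))^2 + (norm (\<Sum>i\<in>I. a i *\<^sub>C v i))^2" by (rule pythagoras[OF o])
  also have "(norm (a j *\<^sub>C v j))^2 = (cmod (a j))^2 * (norm (v j))^2" by (rule t3)
  finally show ?case using insert by simp
qed

lemma cinner_unit_sum:
  fixes v :: "nat \<Rightarrow> 'a::complex_inner"
  assumes orth: "\<And>i j. i \<noteq> j \<Longrightarrow> cinner (v i) (v j) = 0" and nv: "\<And>i. norm (v i) = 1" and I: "finite I"
  shows "cinner (v k) (\<Sum>i\<in>I. a i *\<^sub>C v i) = (if k \<in> I then a k else 0)"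
proof -
  have vv: "cinner (v k) (v k) = 1" using cinner_self_real[of "v k"] nv[of k] by simp
  have "cinner (v k) (\<Sum>i\<in>I. a i *\<^sub>C v i) = (\<Sum>i\<in>I. if i = k then a k else 0)"
    unfolding cinner_sum_right
    by (intro sum.cong refl) (auto simp: cinner_scaleC_right orth vv)
  also have "\<dots> = (if k \<in> I then a k else 0)" using I by (simp add: sum.delta')
  finally show ?thesis .
qed

lemma span_repr:
  fixes u :: "nat \<Rightarrow> 'a::complex_inner"
  assumes orth: "\<And>i j. i \<noteq> j \<Longrightarrow> cinner (u i) (u j) = 0" and nu: "\<And>i. norm (u i) = 1"
    and x: "x \<in> cspan (range u)"
  shows "\<exists>I a. finite I \<and> x = (\<Sum>i\<in>I. a i *\<^sub>C u i)"
proof -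
  obtain F c where F: "x = (\<Sum>v\<in>F. c v *\<^sub>C v)" "finite F" "F \<subseteq> range u"
    using x unfolding cspan_def by blast
  obtain C where C: "finite C" "F = u ` C" using finite_subset_image[OF F(2) F(3)] by blast
  have inj: "inj_on u C"
  proof (rule inj_onI)
    fix i j assume "u i = u j"
    show "i = j"
    proof (rule ccontr)
      assume "i \<noteq> j"
      then have "cinner (u i) (u i) = 0" using orth \<open>u i = u j\<close> by metis
      then have "u i = 0" by (rule cinner_eq_zero_iff[THEN iffD1])
      then show False using nu[of i] by simp
    qed
  qed
  have "x = (\<Sum>i\<in>C. c (u i) *\<^sub>C u i)" unfolding F(1) C(2) by (simp add: sum.reindex[OF inj])
  show ?thesis
  proof (intro exI conjI)
    show "finite C" by (rule C(1))
    show "x = (\<Sum>i\<in>C. c (u i) *\<^sub>C u i)" by fact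
  qed
qed

locale orthoseq =
  fixes S :: "'a::chilbert_space \<Rightarrow> 'a" and u :: "nat \<Rightarrow> 'a" and t :: "nat \<Rightarrow> real"
  assumes S: "cbounded_linear S"
    and nu: "\<And>n. norm (u n) = 1" and Su: "\<And>n. norm (S (u n)) = t n"
    and orth0: "\<And>i j. j < i \<Longrightarrow> cinner (u j) (u i) = 0 \<and> cinner (S (u j)) (S (u i)) = 0"
begin

lemma orth: "i \<noteq> j \<Longrightarrow> cinner (u i) (u j) = 0"
  using orth0[of i j] orth0[of j i] cinner_eq_zero_sym by (cases "i < j") auto

lemma orthS: "i \<noteq> j \<Longrightarrow> cinner (S (u i)) (S (u j)) = 0"
  using orth0[of i j] orth0[of j i] cinner_eq_zero_sym by (cases "i < j") auto

definition "M = closure (cspan (range u))"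

lemma M_closed: "closed_csubspace M"
  unfolding M_def by (rule csubspace_closure) (simp add: csubspace_eq cspan_eq)

lemma u_in_M: "u k \<in> M"
proof -
  have "u k \<in> cspan (range u)" unfolding cspan_eq by (rule cvs.span_base) simp
  then show ?thesis unfolding M_def using closure_subset by blast
qed

lemma M_nz: "M \<noteq> {0}"
proof
  assume "M = {0}"
  then have "u 0 = 0" using u_in_M[of 0] by simp
  then show False using nu[of 0] by simp
qed

lemma core_span:
  assumes w: "\<And>n. 0 < s * (L^2 - (t n)^2)" and x: "x \<in> cspan (range u)"
  shows "s * (L^2 - (t k)^2) * (cmod (cinner (u k) x))^2 \<le> s * (L^2 * (norm x)^2 - (norm (S x))^2)"
proof -
  obtain I a where I: "finite I" "x = (\<Sum>i\<in>I. a i *\<^sub>C u i)" using span_repr[OF orth nu x] by blast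
  have Sl: "clinear S" using S by (rule cbl_clinear)
  have Sx: "S x = (\<Sum>i\<in>I. a i *\<^sub>C S (u i))" unfolding I(2) by (simp add: clinear_sum[OF Sl] clinear_scaleC[OF Sl])
  have nx: "(norm x)^2 = (\<Sum>i\<in>I. (cmod (a i))^2)"
    unfolding I(2) using sum_orth_norm[OF orth I(1), where a=a] nu by simp
  have nSx: "(norm (S x))^2 = (\<Sum>i\<in>I. (cmod (a i))^2 * (t i)^2)"
    unfolding Sx using sum_orth_norm[OF orthS I(1), where a=a] Su by simp
  have eq: "s * (L^2 * (norm x)^2 - (norm (S x))^2) = (\<Sum>i\<in>I. s * (L^2 - (t i)^2) * (cmod (a i))^2)"
    unfolding nx nSx by (simp add: sum_distrib_left sum_subtractf algebra_simps)
  have nn: "0 \<le> s * (L^2 - (t i)^2) * (cmod (a i))^2" for i using w[of i] by simp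
  have ck: "cinner (u k) x = (if k \<in> I then a k else 0)" unfolding I(2) by (rule cinner_unit_sum[OF orth nu I(1)])
  show ?thesis
  proof (cases "k \<in> I")
    case True
    have "s * (L^2 - (t k)^2) * (cmod (a k))^2 \<le> (\<Sum>i\<in>I. s * (L^2 - (t i)^2) * (cmod (a i))^2)"
      by (rule member_le_sum[OF True _ I(1)]) (use nn in auto)
    then show ?thesis using True ck eq by simp
  next
    case False
    have "0 \<le> (\<Sum>i\<in>I. s * (L^2 - (t i)^2) * (cmod (a i))^2)" by (rule sum_nonneg) (use nn in auto)
    then show ?thesis using False ck eq by simp
  qed
qed

lemma core:
  assumes w: "\<And>n. 0 < s * (L^2 - (t n)^2)" and x: "x \<in> M"
  shows "s * (L^2 - (t k)^2) * (cmod (cinner (u k) x))^2 \<le> s * (L^2 * (norm x)^2 - (norm (S x))^2)"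
proof -
  have "closed {x. s * (L^2 - (t k)^2) * (cmod (cinner (u k) x))^2 \<le> s * (L^2 * (norm x)^2 - (norm (S x))^2)}"
    by (intro closed_Collect_le continuous_intros cbl_continuous[OF S])
  moreover have "cspan (range u) \<subseteq> {x. s * (L^2 - (t k)^2) * (cmod (cinner (u k) x))^2 \<le> s * (L^2 * (norm x)^2 - (norm (S x))^2)}"
    using core_span[OF w] by blast
  ultimately have "M \<subseteq> {x. s * (L^2 - (t k)^2) * (cmod (cinner (u k) x))^2 \<le> s * (L^2 * (norm x)^2 - (norm (S x))^2)}"
    unfolding M_def by (rule closure_minimal[rotated])
  then show ?thesis using x by blast
qed

lemma orth_M_zero:
  assumes x: "x \<in> M" and o: "\<And>k. cinner (u k) x = 0"
  shows "x = 0"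
proof -
  have "cspan (range u) \<subseteq> {z. cinner x z = 0}" using orth_span[of "range u" x] o by blast
  moreover have "closed {z. cinner x z = 0}"
    using closed_Collect_eq[OF continuous_cinner_right continuous_on_const] by blast
  ultimately have "M \<subseteq> {z. cinner x z = 0}" unfolding M_def by (rule closure_minimal)
  then have "cinner x x = 0" using x by blast
  then show ?thesis by (rule cinner_eq_zero_iff[THEN iffD1])
qed

lemma strict:
  assumes w: "\<And>n. 0 < s * (L^2 - (t n)^2)" and x: "x \<in> M" and eq: "s * (L^2 * (norm x)^2 - (norm (S x))^2) = 0"
  shows "x = 0"
proof (rule orth_M_zero[OF x])
  fix k
  have "s * (L^2 - (t k)^2) * (cmod (cinner (u k) x))^2 \<le> 0" using core[OF w x, of k] eq by simp
  then have "s * (L^2 - (t k)^2) * (cmod (cinner (u k) x))^2 \<le> s * (L^2 - (t k)^2) * 0" by simp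
  then have "(cmod (cinner (u k) x))^2 \<le> 0" using w[of k] by (rule mult_left_le_imp_le)
  then show "cinner (u k) x = 0" by simp
qed

lemma nonattain_sup:
  assumes tL: "\<And>n. t n < L" and lim: "t \<longlonglongrightarrow> L" and t0: "\<And>n. 0 \<le> t n"
  shows "\<not> norm_attaining_on S M"
proof -
  have w: "\<And>n. 0 < 1 * (L^2 - (t n)^2)" using tL t0 by (simp add: power_strict_mono)
  have L0: "L > 0" using tL[of 0] t0[of 0] by simp
  define X where "X = {norm (S x) |x. x \<in> M \<and> norm x = 1}"
  have ub: "v \<le> L" if vX: "v \<in> X" for v
  proof -
    obtain x where x: "x \<in> M" "norm x = 1" "v = norm (S x)" using vX unfolding X_def by blast
    have "0 \<le> 1 * (L^2 * (norm x)^2 - (norm (S x))^2)"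
      using core[OF w x(1), of 0] by (smt (verit) mult_nonneg_nonneg zero_le_power2 w)
    then have "(norm (S x))^2 \<le> L^2" using x(2) by simp
    then show ?thesis using x(3) L0 power2_le_imp_le by fastforce
  qed
  have X0: "X \<noteq> {}" using u_in_M nu by (auto simp: X_def)
  have bX: "bdd_above X" by (rule bdd_aboveI[of _ L]) (rule ub)
  have "Sup X \<le> L" using cSup_least[OF X0] ub by blast
  moreover have "L \<le> Sup X"
  proof (rule LIMSEQ_le_const2[OF lim])
    have "t n \<in> X" for n
    proof -
      have "t n = norm (S (u n)) \<and> u n \<in> M \<and> norm (u n) = 1" using u_in_M[of n] nu[of n] Su[of n] by simp
      then show ?thesis unfolding X_def by blast
    qed
    then show "\<exists>N. \<forall>n\<ge>N. t n \<le> Sup X" using cSup_upper[OF _ bX] by blast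
  qed
  ultimately have SL: "norm_on S M = L" unfolding norm_on_def X_def[symmetric] by simp
  show ?thesis
  proof
    assume "norm_attaining_on S M"
    then obtain x where x: "x \<in> M" "norm x = 1" "norm (S x) = L" unfolding norm_attaining_on_def SL by blast
    then have "1 * (L^2 * (norm x)^2 - (norm (S x))^2) = 0" by simp
    then have "x = 0" using strict[OF w x(1)] by blast
    then show False using x(2) by simp
  qed
qed

lemma nonattain_inf:
  assumes tL: "\<And>n. L < t n" and lim: "t \<longlonglongrightarrow> L" and L0: "0 \<le> L"
  shows "\<not> min_attaining_on S M"
proof -
  have w: "\<And>n. 0 < (-1) * (L^2 - (t n)^2)" using tL L0 by (simp add: power_strict_mono)
  define X where "X = {norm (S x) |x. x \<in> M \<and> norm x = 1}"
  have lb: "L \<le> v" if vX: "v \<in> X" for v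
  proof -
    obtain x where x: "x \<in> M" "norm x = 1" "v = norm (S x)" using vX unfolding X_def by blast
    have "0 \<le> (-1) * (L^2 * (norm x)^2 - (norm (S x))^2)"
      using core[OF w x(1), of 0] by (smt (verit) mult_nonneg_nonneg zero_le_power2 w)
    then have "L^2 \<le> (norm (S x))^2" using x(2) by simp
    then show ?thesis using x(3) power2_le_imp_le norm_ge_zero by blast
  qed
  have X0: "X \<noteq> {}" using u_in_M nu by (auto simp: X_def)
  have bX: "bdd_below X" by (rule bdd_belowI[of _ L]) (rule lb)
  have "L \<le> Inf X" using cInf_greatest[OF X0] lb by blast
  moreover have "Inf X \<le> L"
  proof (rule LIMSEQ_le_const[OF lim])
    have "t n \<in> X" for n
    proof -
      have "t n = norm (S (u n)) \<and> u n \<in> M \<and> norm (u n) = 1" using u_in_M[of n] nu[of n] Su[of n] by simp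
      then show ?thesis unfolding X_def by blast
    qed
    then show "\<exists>N. \<forall>n\<ge>N. Inf X \<le> t n" using cInf_lower[OF _ bX] by blast
  qed
  ultimately have SL: "min_modulus_on S M = L" unfolding min_modulus_on_def X_def[symmetric] by simp
  show ?thesis
  proof
    assume "min_attaining_on S M"
    then obtain x where x: "x \<in> M" "norm x = 1" "norm (S x) = L" unfolding min_attaining_on_def SL by blast
    then have "(-1) * (L^2 * (norm x)^2 - (norm (S x))^2) = 0" by simp
    then have "x = 0" using strict[OF w x(1)] by blast
    then show False using x(2) by simp
  qed
qed

end

lemma inv_suc_bounds: "0 < inverse (real (Suc n))" "inverse (real (Suc n)) \<le> 1"
  by (auto simp: inverse_le_1_iff)

lemma hard:
  fixes S T :: "'a::chilbert_space \<Rightarrow> 'a"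
  assumes S: "cbounded_linear S" and T: "cbounded_linear T" and idem: "T \<circ> T = T"
    and nR: "\<not> cfinite_dim (range T)" and nN: "\<not> cfinite_dim {x. T x = 0}"
    and low: "\<And>x. T x = 0 \<Longrightarrow> norm (S x) \<le> 1/8 * norm x"
    and high: "\<And>x. x \<in> range T \<Longrightarrow> 7/8 * norm x \<le> norm (S x)"
  shows "(\<exists>M. closed_csubspace M \<and> M \<noteq> {0} \<and> \<not> norm_attaining_on S M)
       \<and> (\<exists>M. closed_csubspace M \<and> M \<noteq> {0} \<and> \<not> min_attaining_on S M)"
proof
  have lim0: "(\<lambda>n. inverse (real (Suc n)) / 4) \<longlonglongrightarrow> 0"
    using tendsto_divide_zero[OF LIMSEQ_inverse_real_of_nat, of 4] by simp
  define t1 where "t1 n = 1/2 - inverse (real (Suc n)) / 4" for n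
  have t1: "1/8 < t1 n \<and> t1 n < 7/8" for n using inv_suc_bounds[of n] unfolding t1_def by linarith
  obtain u where u: "\<forall>n. norm (u n) = 1 \<and> norm (S (u n)) = t1 n"
    "\<forall>i j. j < i \<longrightarrow> cinner (u j) (u i) = 0 \<and> cinner (S (u j)) (S (u i)) = 0"
    using seq_exists[where t=t1, OF S T idem nR nN low high t1] by blast
  interpret o1: orthoseq S u t1 using S u by unfold_locales auto
  have "\<not> norm_attaining_on S o1.M"
  proof (rule o1.nonattain_sup)
    show "t1 n < 1/2" for n using inv_suc_bounds[of n] unfolding t1_def by linarith
    show "0 \<le> t1 n" for n using t1[of n] by simp
    show "t1 \<longlonglongrightarrow> 1/2" unfolding t1_def using tendsto_diff[OF tendsto_const lim0, of "1/2"] by simp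
  qed
  then show "\<exists>M. closed_csubspace M \<and> M \<noteq> {0} \<and> \<not> norm_attaining_on S M"
    using o1.M_closed o1.M_nz by blast
next
  have lim0: "(\<lambda>n. inverse (real (Suc n)) / 4) \<longlonglongrightarrow> 0"
    using tendsto_divide_zero[OF LIMSEQ_inverse_real_of_nat, of 4] by simp
  define t2 where "t2 n = 1/2 + inverse (real (Suc n)) / 4" for n
  have t2: "1/8 < t2 n \<and> t2 n < 7/8" for n using inv_suc_bounds[of n] unfolding t2_def by linarith
  obtain u where u: "\<forall>n. norm (u n) = 1 \<and> norm (S (u n)) = t2 n"
    "\<forall>i j. j < i \<longrightarrow> cinner (u j) (u i) = 0 \<and> cinner (S (u j)) (S (u i)) = 0"
    using seq_exists[where t=t2, OF S T idem nR nN low high t2] by blast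
  interpret o2: orthoseq S u t2 using S u by unfold_locales auto
  have "\<not> min_attaining_on S o2.M"
  proof (rule o2.nonattain_inf)
    show "1/2 < t2 n" for n using inv_suc_bounds[of n] unfolding t2_def by linarith
    show "(0::real) \<le> 1/2" by simp
    show "t2 \<longlonglongrightarrow> 1/2" unfolding t2_def using tendsto_add[OF tendsto_const lim0, of "1/2"] by simp
  qed
  then show "\<exists>M. closed_csubspace M \<and> M \<noteq> {0} \<and> \<not> min_attaining_on S M"
    using o2.M_closed o2.M_nz by blast
qed

theorem theorem6p1:
  fixes T :: "'a::chilbert_space \<Rightarrow> 'a"
  assumes "\<not> cfinite_dim (UNIV :: 'a set)"
    and "separable_H TYPE('a)"
    and "cbounded_linear T"
    and "T \<circ> T = T"
  shows "(T \<in> AN \<longleftrightarrow> cfinite_dim (range T) \<or> cfinite_dim {x. T x = 0})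
       \<and> (cfinite_dim (range T) \<or> cfinite_dim {x. T x = 0} \<longleftrightarrow> T \<in> AM)
       \<and> (T \<in> AM \<longleftrightarrow> T \<in> AN_closure)"
proof -
  have T: "cbounded_linear T" and idem: "T \<circ> T = T" using assms by auto
  have TT: "T (T x) = T x" for x using fun_cong[OF idem, of x] by simp
  define P where "P \<longleftrightarrow> cfinite_dim (range T) \<or> cfinite_dim {x. T x = 0}"
  have easyAN: "T \<in> AN" if P
    unfolding AN_def using T easy[OF T idem that[unfolded P_def]] by blast
  have easyAM: "T \<in> AM" if P
    unfolding AM_def using T easy[OF T idem that[unfolded P_def]] by blast
  have hardT: "(\<exists>M. closed_csubspace M \<and> M \<noteq> {0} \<and> \<not> norm_attaining_on T M)
       \<and> (\<exists>M. closed_csubspace M \<and> M \<noteq> {0} \<and> \<not> min_attaining_on T M)" if nP: "\<not> P"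
  proof (rule hard[OF T T idem])
    show "\<not> cfinite_dim (range T)" "\<not> cfinite_dim {x. T x = 0}" using nP by (auto simp: P_def)
    show "norm (T x) \<le> 1/8 * norm x" if "T x = 0" for x using that by simp
    show "7/8 * norm x \<le> norm (T x)" if "x \<in> range T" for x
    proof -
      have "T x = x" using that TT by auto
      then show ?thesis by simp
    qed
  qed
  have AN_P: "P" if "T \<in> AN"
  proof (rule ccontr)
    assume "\<not> P"
    then obtain M where "closed_csubspace M" "M \<noteq> {0}" "\<not> norm_attaining_on T M" using hardT by blast
    then show False using that unfolding AN_def by blast
  qed
  have AM_P: "P" if "T \<in> AM"
  proof (rule ccontr)
    assume "\<not> P"
    then obtain M where "closed_csubspace M" "M \<noteq> {0}" "\<not> min_attaining_on T M" using hardT by blast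
    then show False using that unfolding AM_def by blast
  qed
  have ANc_P: "P" if ANc: "T \<in> AN_closure"
  proof (rule ccontr)
    assume nP: "\<not> P"
    have all8: "\<forall>e>0. \<exists>S\<in>AN. onorm (\<lambda>x. T x - S x) < e" using ANc by (simp add: AN_closure_def)
    have e8: "(1/8::real) > 0" by simp
    have "\<exists>S\<in>AN. onorm (\<lambda>x. T x - S x) < 1/8" using all8 e8 by blast
    then obtain S where S: "S \<in> AN" "onorm (\<lambda>x. T x - S x) < 1/8" by blast
    have Sb: "cbounded_linear S" using S(1) by (simp add: AN_def)
    have bl: "bounded_linear (\<lambda>x. T x - S x)"
      by (intro bounded_linear_sub cbl_bounded_linear T Sb)
    have close: "norm (T x - S x) \<le> 1/8 * norm x" for x
    proof -
      have "norm (T x - S x) \<le> onorm (\<lambda>x. T x - S x) * norm x" using onorm[OF bl] .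
      also have "\<dots> \<le> 1/8 * norm x" using S(2) by (intro mult_right_mono) auto
      finally show ?thesis .
    qed
    have "(\<exists>M. closed_csubspace M \<and> M \<noteq> {0} \<and> \<not> norm_attaining_on S M)
       \<and> (\<exists>M. closed_csubspace M \<and> M \<noteq> {0} \<and> \<not> min_attaining_on S M)"
    proof (rule hard[OF Sb T idem])
      show "\<not> cfinite_dim (range T)" "\<not> cfinite_dim {x. T x = 0}" using nP by (auto simp: P_def)
      show "norm (S x) \<le> 1/8 * norm x" if "T x = 0" for x
        using close[of x] that by (simp add: norm_minus_commute)
      show "7/8 * norm x \<le> norm (S x)" if "x \<in> range T" for x
      proof -
        have Tx: "T x = x" using that TT by auto
        have "norm x \<le> norm (S x) + norm (T x - S x)"
          using norm_triangle_ineq[of "S x" "T x - S x"] Tx by simp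
        then show ?thesis using close[of x] by simp
      qed
    qed
    then obtain M where "closed_csubspace M" "M \<noteq> {0}" "\<not> norm_attaining_on S M" by blast
    then show False using S(1) unfolding AN_def by blast
  qed
  have P_ANc: "T \<in> AN_closure" if hP: P
  proof -
    have z: "onorm (\<lambda>x. T x - T x) = 0" by (simp add: onorm_zero)
    have TA: "T \<in> AN" using easyAN[OF hP] .
    show ?thesis unfolding AN_closure_def
    proof (intro CollectI conjI allI impI T)
      fix e :: real assume "0 < e"
      then have "onorm (\<lambda>x. T x - T x) < e" using z by simp
      then show "\<exists>S\<in>AN. onorm (\<lambda>x. T x - S x) < e" using TA by blast
    qed
  qed
  show ?thesis unfolding P_def[symmetric]
    using easyAN easyAM AN_P AM_P ANc_P P_ANc by blast
qed

end
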